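(* Two words in the letters $\sigma_i,\sigma_i^{-1},x_i$ represent the same element of $SB_n$ if and only if their Garside left normal forms are identical; likewise, if and only if their Garside right normal forms are identical.
   Context: Fix $n\ge 2$. The singular braid monoid $SB_n$ is the monoid with generators $\sigma_i,\sigma_i^{-1},x_i$ ($i=1,\dots,n-1$) and relations: $\sigma_i\sigma_j=\sigma_j\sigma_i$ and $x_ix_j=x_jx_i$ if $|i-j|>1$; $x_i\sigma_j=\sigma_jx_i$ if $|i-j|\ne1$; $\sigma_i\sigma_{i+1}\sigma_i=\sigma_{i+1}\sigma_i\sigma_{i+1}$; $\sigma_i\sigma_{i+1}x_i=x_{i+1}\sigma_i\sigma_{i+1}$; $\sigma_{i+1}\sigma_ix_{i+1}=x_i\sigma_{i+1}\sigma_i$; $\sigma_i\sigma_i^{-1}=\sigma_i^{-1}\sigma_i=1$. $SB_n^+$ has generators $\sigma_i,x_i$ and all relations but the last; for positive words (words in $\sigma_i,x_i$) $A\doteq B$ means equality in $SB_n^+$. $\Delta\equiv\sigma_1\cdots\sigma_{n-1}\,\sigma_1\cdots\sigma_{n-2}\cdots\sigma_1\sigma_2\,\sigma_1$. Order positive words lexicographically with $\sigma_1<\cdots<\sigma_{n-1}<x_1<\cdots<x_{n-1}$; the base of a positive word is the lexicographically smallest positive word positively equal to it. The Garside left normal form of a word $W$ is the (unique) expression $W=\Delta^m\overline{A}$ in $SB_n$ with $m\in\mathbb Z$ and $\overline{A}$ a positive word equal to its own base and not positively equal to $\Delta Z$ for any positive $Z$. The Garside right normal form is the (unique) expression $W=\overline{A}\Delta^m$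 with $m\in\mathbb Z$ and $\overline{A}$ a positive word equal to its own base and not positively equal to $Z\Delta$ for any positive $Z$. *)

theory Defs
  imports Main
begin

text \<open>Letters: Sg i = sigma_i, Si i = sigma_i^{-1}, Xg i = x_i.\<close>
datatype gen = Sg nat | Si nat | Xg nat

type_synonym word = "gen list"

fun gidx :: "gen \<Rightarrow> nat" where
  "gidx (Sg i) = i" | "gidx (Si i) = i" | "gidx (Xg i) = i"

definition valid_word :: "nat \<Rightarrow> word \<Rightarrow> bool" where
  "valid_word n w \<longleftrightarrow> (\<forall>g\<in>set w. 1 \<le> gidx g \<and> gidx g \<le> n - 1)"

fun is_pos_letter :: "gen \<Rightarrow> bool" where
  "is_pos_letter (Si i) = False" | "is_pos_letter _ = True"

definition positive_word :: "word \<Rightarrow> bool" where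
  "positive_word w \<longleftrightarrow> (\<forall>g\<in>set w. is_pos_letter g)"

inductive prel :: "nat \<Rightarrow> word \<Rightarrow> word \<Rightarrow> bool" for n where
  comm_ss: "\<lbrakk>1 \<le> i; i \<le> n - 1; 1 \<le> j; j \<le> n - 1; i + 1 < j \<or> j + 1 < i\<rbrakk>
     \<Longrightarrow> prel n [Sg i, Sg j] [Sg j, Sg i]"
| comm_xx: "\<lbrakk>1 \<le> i; i \<le> n - 1; 1 \<le> j; j \<le> n - 1; i + 1 < j \<or> j + 1 < i\<rbrakk>
     \<Longrightarrow> prel n [Xg i, Xg j] [Xg j, Xg i]"
| comm_xs: "\<lbrakk>1 \<le> i; i \<le> n - 1; 1 \<le> j; j \<le> n - 1; i \<noteq> j + 1; j \<noteq> i + 1\<rbrakk>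
     \<Longrightarrow> prel n [Xg i, Sg j] [Sg j, Xg i]"
| braid: "\<lbrakk>1 \<le> i; i + 1 \<le> n - 1\<rbrakk>
     \<Longrightarrow> prel n [Sg i, Sg (i+1), Sg i] [Sg (i+1), Sg i, Sg (i+1)]"
| mixed1: "\<lbrakk>1 \<le> i; i + 1 \<le> n - 1\<rbrakk>
     \<Longrightarrow> prel n [Sg i, Sg (i+1), Xg i] [Xg (i+1), Sg i, Sg (i+1)]"
| mixed2: "\<lbrakk>1 \<le> i; i + 1 \<le> n - 1\<rbrakk>
     \<Longrightarrow> prel n [Sg (i+1), Sg i, Xg (i+1)] [Xg i, Sg (i+1), Sg i]"

inductive irel :: "nat \<Rightarrow> word \<Rightarrow> word \<Rightarrow> bool" for n where
  "\<lbrakk>1 \<le> i; i \<le> n - 1\<rbrakk> \<Longrightarrow> irel n [Sg i, Si i] []"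
| "\<lbrakk>1 \<le> i; i \<le> n - 1\<rbrakk> \<Longrightarrow> irel n [Si i, Sg i] []"

inductive word_cong :: "(word \<Rightarrow> word \<Rightarrow> bool) \<Rightarrow> word \<Rightarrow> word \<Rightarrow> bool" for R where
  step: "R u v \<Longrightarrow> word_cong R (p @ u @ q) (p @ v @ q)"
| refl: "word_cong R w w"
| sym: "word_cong R u v \<Longrightarrow> word_cong R v u"
| trans: "word_cong R u v \<Longrightarrow> word_cong R v w \<Longrightarrow> word_cong R u w"

definition pos_eq :: "nat \<Rightarrow> word \<Rightarrow> word \<Rightarrow> bool" where
  "pos_eq n = word_cong (prel n)"

definition sb_eq :: "nat \<Rightarrow> word \<Rightarrow> word \<Rightarrow> bool" where
  "sb_eq n = word_cong (\<lambda>u v. prel n u v \<or> irel n u v)"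

text \<open>Delta = sigma_1..sigma_{n-1} sigma_1..sigma_{n-2} ... sigma_1.\<close>
definition Delta :: "nat \<Rightarrow> word" where
  "Delta n = concat (map (\<lambda>k. map Sg [1..<Suc k]) (rev [1..<n]))"

fun ginv :: "gen \<Rightarrow> gen" where
  "ginv (Sg i) = Si i" | "ginv (Si i) = Sg i" | "ginv (Xg i) = Xg i"

definition winv :: "word \<Rightarrow> word" where
  "winv w = rev (map ginv w)"

definition Delta_pow :: "nat \<Rightarrow> int \<Rightarrow> word" where
  "Delta_pow n m = (if 0 \<le> m then concat (replicate (nat m) (Delta n))
                    else concat (replicate (nat (- m)) (winv (Delta n))))"

fun rank :: "nat \<Rightarrow> gen \<Rightarrow> nat" where
  "rank n (Sg i) = i" | "rank n (Xg i) = n - 1 + i" | "rank n (Si i) = 0"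

definition lex_less :: "nat \<Rightarrow> word \<Rightarrow> word \<Rightarrow> bool" where
  "lex_less n A B = lexordp (<) (map (rank n) A) (map (rank n) B)"

definition is_own_base :: "nat \<Rightarrow> word \<Rightarrow> bool" where
  "is_own_base n A \<longleftrightarrow> positive_word A \<and>
     (\<forall>B. positive_word B \<and> pos_eq n A B \<longrightarrow> \<not> lex_less n B A)"

definition is_left_nf :: "nat \<Rightarrow> word \<Rightarrow> int \<Rightarrow> word \<Rightarrow> bool" where
  "is_left_nf n W m A \<longleftrightarrow> valid_word n A \<and> is_own_base n A \<and>
     \<not> (\<exists>Z. positive_word Z \<and> pos_eq n A (Delta n @ Z)) \<and>
     sb_eq n W (Delta_pow n m @ A)"

definition is_right_nf :: "nat \<Rightarrow> word \<Rightarrow> word \<Rightarrow> int \<Rightarrow> bool" where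
  "is_right_nf n W A m \<longleftrightarrow> valid_word n A \<and> is_own_base n A \<and>
     \<not> (\<exists>Z. positive_word Z \<and> pos_eq n A (Z @ Delta n)) \<and>
     sb_eq n W (A @ Delta_pow n m)"

definition left_nf :: "nat \<Rightarrow> word \<Rightarrow> int \<times> word" where
  "left_nf n W = (THE p. is_left_nf n W (fst p) (snd p))"

definition right_nf :: "nat \<Rightarrow> word \<Rightarrow> word \<times> int" where
  "right_nf n W = (THE p. is_right_nf n W (fst p) (snd p))"

end

theory Submission
  imports Defs
begin

fun cmp :: "gen \<Rightarrow> gen \<Rightarrow> word option" where
  "cmp (Sg i) (Sg j) = (if i = j then None else if i = j+1 \<or> j = i+1 then Some [Sg j, Sg i] else Some [Sg j])"
| "cmp (Xg i) (Xg j) = (if i = j \<or> i = j+1 \<or> j = i+1 then None else Some [Xg j])"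
| "cmp (Xg i) (Sg j) = (if i = j+1 \<or> j = i+1 then Some [Sg j, Sg i] else Some [Sg j])"
| "cmp (Sg j) (Xg i) = (if i = j+1 \<or> j = i+1 then Some [Sg i, Xg j] else Some [Xg i])"
| "cmp _ _ = None"

datatype rres = Ok "word \<times> word" | Fail | NoFuel

fun rv :: "nat \<Rightarrow> word \<Rightarrow> word \<Rightarrow> rres" where
  "rv 0 P Q = NoFuel"
| "rv (Suc f) [] Q = Ok ([], Q)"
| "rv (Suc f) (d#P) [] = Ok (d#P, [])"
| "rv (Suc f) (d#P) (e#Q) = (if d = e then rv f P Q else
    (case (cmp d e, cmp e d) of (Some A, Some B) \<Rightarrow>
       (case rv f P A of Ok (P1, A1) \<Rightarrow>
         (case rv f B Q of Ok (B1, Q1) \<Rightarrow>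
            (case rv f P1 Q1 of Ok (P2, Q2) \<Rightarrow> Ok (B1 @ P2, A1 @ Q2) | r \<Rightarrow> r)
          | r \<Rightarrow> r)
        | r \<Rightarrow> r)
     | _ \<Rightarrow> Fail))"

definition cube :: "nat \<Rightarrow> gen \<Rightarrow> gen \<Rightarrow> gen \<Rightarrow> bool" where
 "cube N a b c = (case (cmp c a, cmp c b, cmp a c, cmp b c) of (Some Ca, Some Cb, Some Ac, Some Bc) \<Rightarrow>
   (case rv N Ca Cb of Fail \<Rightarrow> True | NoFuel \<Rightarrow> False | Ok (P', Q') \<Rightarrow>
     (case (cmp a b, cmp b a) of (Some K1, Some K2) \<Rightarrow>
        (case rv N (Ac @ Q') K1 of Ok (k, []) \<Rightarrow> rv N (Bc @ P') (K2 @ k) = Ok ([], []) | _ \<Rightarrow> False)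
      | _ \<Rightarrow> False))
  | _ \<Rightarrow> True)"

fun gm :: "(nat \<Rightarrow> nat) \<Rightarrow> gen \<Rightarrow> gen" where
  "gm h (Sg i) = Sg (h i)" | "gm h (Xg i) = Xg (h i)" | "gm h (Si i) = Si (h i)"

definition good :: "(nat \<Rightarrow> nat) \<Rightarrow> nat set \<Rightarrow> bool" where
  "good h S \<longleftrightarrow> (\<forall>x\<in>S. \<forall>y\<in>S. (h x = h y \<longleftrightarrow> x = y) \<and> (h x = Suc (h y) \<longleftrightarrow> x = Suc y))"

definition idxs :: "word \<Rightarrow> nat set" where "idxs W = gidx ` set W"

fun rmap :: "(word \<Rightarrow> word) \<Rightarrow> rres \<Rightarrow> rres" where
  "rmap g (Ok (P, Q)) = Ok (g P, g Q)" | "rmap g Fail = Fail" | "rmap g NoFuel = NoFuel"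

lemma comp_gm:
  assumes "good h S" "gidx a \<in> S" "gidx b \<in> S"
  shows "cmp (gm h a) (gm h b) = map_option (map (gm h)) (cmp a b)"
  using assms unfolding good_def
  by (cases a; cases b) (auto simp: Suc_eq_plus1[symmetric])

lemma comp_idx: "cmp a b = Some A \<Longrightarrow> idxs A \<subseteq> {gidx a, gidx b}"
  by (cases a; cases b) (auto simp: idxs_def split: if_splits)

lemma gm_eq: "good h S \<Longrightarrow> gidx a \<in> S \<Longrightarrow> gidx b \<in> S \<Longrightarrow> (gm h a = gm h b) = (a = b)"
  unfolding good_def by (cases a; cases b) auto

lemma rv_gm:
  "good h S \<Longrightarrow> idxs P \<subseteq> S \<Longrightarrow> idxs Q \<subseteq> S \<Longrightarrow>
   rv N (map (gm h) P) (map (gm h) Q) = rmap (map (gm h)) (rv N P Q) \<and>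
   (\<forall>P' Q'. rv N P Q = Ok (P', Q') \<longrightarrow> idxs P' \<subseteq> S \<and> idxs Q' \<subseteq> S)"
proof (induction N P Q rule: rv.induct)
  case (1 P Q) then show ?case by simp
next
  case (2 f Q) then show ?case by (simp add: idxs_def)
next
  case (3 f d P) then show ?case by (simp add: idxs_def)
next
  case (4 f d P e Q)
  have dS: "gidx d \<in> S" and eS: "gidx e \<in> S" and PS: "idxs P \<subseteq> S" and QS: "idxs Q \<subseteq> S"
    using "4.prems" by (auto simp: idxs_def)
  show ?case
  proof (cases "d = e")
    case True
    then show ?thesis using "4.IH"(1)[OF True "4.prems"(1) PS QS] by simp
  next
    case False
    have ne: "gm h d \<noteq> gm h e" using gm_eq[OF "4.prems"(1) dS eS] False by simp
    show ?thesis
    proof (cases "cmp d e")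
      case None
      then show ?thesis using False ne comp_gm[OF "4.prems"(1) dS eS] by simp
    next
      case (Some A)
      show ?thesis
      proof (cases "cmp e d")
        case None
        then show ?thesis using False ne Some comp_gm[OF "4.prems"(1) eS dS] comp_gm[OF "4.prems"(1) dS eS] by simp
      next
        case (Some B)
        note A = \<open>cmp d e = Some A\<close>
        have AS: "idxs A \<subseteq> S" using comp_idx[OF A] dS eS by auto
        have BS: "idxs B \<subseteq> S" using comp_idx[OF Some] dS eS by auto
        have cA: "cmp (gm h d) (gm h e) = Some (map (gm h) A)" using comp_gm[OF "4.prems"(1) dS eS] A by simp
        have cB: "cmp (gm h e) (gm h d) = Some (map (gm h) B)" using comp_gm[OF "4.prems"(1) eS dS] Some by simp
        note IH2 = "4.IH"(2)[OF False HOL.refl A Some "4.prems"(1) PS AS]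
        show ?thesis
        proof (cases "rv f P A")
          case (Ok r1)
          obtain P1 A1 where r1: "r1 = (P1, A1)" by fastforce
          have P1S: "idxs P1 \<subseteq> S" "idxs A1 \<subseteq> S" using IH2 Ok r1 by auto
          note IH3 = "4.IH"(3)[OF False HOL.refl A Some Ok[unfolded r1] HOL.refl "4.prems"(1) BS QS]
          show ?thesis
          proof (cases "rv f B Q")
            case (Ok r2)
            obtain B1 Q1 where r2: "r2 = (B1, Q1)" by fastforce
            have B1S: "idxs B1 \<subseteq> S" "idxs Q1 \<subseteq> S" using IH3 Ok r2 by auto
            note IH4 = "4.IH"(4)[OF False HOL.refl A Some \<open>rv f P A = Ok r1\<close>[unfolded r1] HOL.refl Ok[unfolded r2] HOL.refl "4.prems"(1) P1S(1) B1S(2)]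
            show ?thesis
              using False ne cA cB A Some IH2 IH3 IH4 \<open>rv f P A = Ok r1\<close> Ok r1 r2 P1S B1S
              by (cases "rv f P1 Q1") (auto simp: idxs_def image_subset_iff)
          next
            case Fail then show ?thesis using False ne cA cB A Some IH2 IH3 \<open>rv f P A = Ok r1\<close> r1 by simp
          next
            case NoFuel then show ?thesis using False ne cA cB A Some IH2 IH3 \<open>rv f P A = Ok r1\<close> r1 by simp
          qed
        next
          case Fail then show ?thesis using False ne cA cB A Some IH2 by simp
        next
          case NoFuel then show ?thesis using False ne cA cB A Some IH2 by simp
        qed
      qed
    qed
  qed
qed

definition L5 :: "gen list" where "L5 = map Sg [0..<5] @ map Xg [0..<5]"

lemma cube_fin_list: "list_all (\<lambda>a. list_all (\<lambda>b. list_all (\<lambda>c. a = b \<or> b = c \<or> a = c \<or> cube 5 a b c) L5) L5) L5"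
  by code_simp

lemma cube_fin: "a \<in> set L5 \<Longrightarrow> b \<in> set L5 \<Longrightarrow> c \<in> set L5 \<Longrightarrow> a \<noteq> b \<Longrightarrow> b \<noteq> c \<Longrightarrow> a \<noteq> c \<Longrightarrow> cube 5 a b c"
  using cube_fin_list by (auto simp: list_all_iff)

lemma compress_sorted:
  fixes u v w :: nat assumes "u \<le> v" "v \<le> w"
  shows "\<exists>h. good h {u,v,w} \<and> h u < 5 \<and> h v < 5 \<and> h w < 5"
proof -
  define h where "h t = (if t \<le> v then min (t - u) 2 else min (v - u) 2 + min (t - v) 2)" for t
  have "good h {u,v,w}" using assms unfolding good_def h_def by (auto simp: min_def split: if_splits)
  moreover have "h u < 5 \<and> h v < 5 \<and> h w < 5" unfolding h_def by (auto simp: min_def)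
  ultimately show ?thesis by blast
qed

lemma compress:
  fixes x y z :: nat
  shows "\<exists>h. good h {x,y,z} \<and> h x < 5 \<and> h y < 5 \<and> h z < 5"
proof -
  have "x \<le> y \<and> y \<le> z \<or> x \<le> z \<and> z \<le> y \<or> y \<le> x \<and> x \<le> z \<or> y \<le> z \<and> z \<le> x \<or> z \<le> x \<and> x \<le> y \<or> z \<le> y \<and> y \<le> x" by linarith
  then show ?thesis
  proof (elim disjE conjE)
    assume "x \<le> y" "y \<le> z" then show ?thesis using compress_sorted[of x y z] by auto
  next
    assume "x \<le> z" "z \<le> y" then show ?thesis using compress_sorted[of x z y] by (auto simp: insert_commute)
  next
    assume "y \<le> x" "x \<le> z" then show ?thesis using compress_sorted[of y x z] by (auto simp: insert_commute)
  next
    assume "y \<le> z" "z \<le> x" then show ?thesis using compress_sorted[of y z x] by (auto simp: insert_commute)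
  next
    assume "z \<le> x" "x \<le> y" then show ?thesis using compress_sorted[of z x y] by (auto simp: insert_commute)
  next
    assume "z \<le> y" "y \<le> x" then show ?thesis using compress_sorted[of z y x] by (auto simp: insert_commute)
  qed
qed

lemma rmap_Ok_nil: "rmap (map g) r = Ok ([], []) \<longleftrightarrow> r = Ok ([], [])"
  by (cases r) auto

lemma cube_gm:
  assumes g: "good h {gidx a, gidx b, gidx c}"
  shows "cube N (gm h a) (gm h b) (gm h c) = cube N a b c"
proof -
  let ?S = "{gidx a, gidx b, gidx c}"
  let ?g = "map (gm h)"
  have c1: "cmp (gm h x) (gm h y) = map_option ?g (cmp x y)" if "x \<in> {a,b,c}" "y \<in> {a,b,c}" for x y
    using comp_gm[OF g] that by auto
  have ix: "idxs X \<subseteq> ?S" if "cmp x y = Some X" "x \<in> {a,b,c}" "y \<in> {a,b,c}" for x y X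
    using comp_idx[OF that(1)] that by auto
  have rvg: "rv N (?g P) (?g Q) = rmap ?g (rv N P Q) \<and> (\<forall>P' Q'. rv N P Q = Ok (P', Q') \<longrightarrow> idxs P' \<subseteq> ?S \<and> idxs Q' \<subseteq> ?S)"
    if "idxs P \<subseteq> ?S" "idxs Q \<subseteq> ?S" for P Q
    using rv_gm[OF g that] .
  show ?thesis
  proof (cases "cmp c a" "cmp c b" "cmp a c" "cmp b c" rule: option.exhaust[case_product option.exhaust option.exhaust option.exhaust])
    case (Some_Some_Some_Some Ca Cb Ac Bc)
    note cs = this
    have iCa: "idxs Ca \<subseteq> ?S" and iCb: "idxs Cb \<subseteq> ?S" and iAc: "idxs Ac \<subseteq> ?S" and iBc: "idxs Bc \<subseteq> ?S"
      using ix cs by auto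
    note r1 = rvg[OF iCa iCb]
    show ?thesis
    proof (cases "rv N Ca Cb")
      case (Ok pq)
      obtain P' Q' where pq: "pq = (P', Q')" by fastforce
      have iP: "idxs P' \<subseteq> ?S" "idxs Q' \<subseteq> ?S" using r1 Ok pq by auto
      show ?thesis
      proof (cases "cmp a b" "cmp b a" rule: option.exhaust[case_product option.exhaust])
        case (Some_Some K1 K2)
        have iK: "idxs K1 \<subseteq> ?S" "idxs K2 \<subseteq> ?S" using ix Some_Some by auto
        have iAQ: "idxs (Ac @ Q') \<subseteq> ?S" using iAc iP by (auto simp: idxs_def)
        note r2 = rvg[OF iAQ iK(1)]
        show ?thesis
        proof (cases "rv N (Ac @ Q') K1")
          case (Ok kr)
          obtain k r where kr: "kr = (k, r)" by fastforce
          have ik: "idxs k \<subseteq> ?S" using r2 Ok kr by auto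
          have iBP: "idxs (Bc @ P') \<subseteq> ?S" "idxs (K2 @ k) \<subseteq> ?S" using iBc iP iK ik by (auto simp: idxs_def)
          note r3 = rvg[OF iBP]
          show ?thesis using cs Some_Some c1 r1 r2 r3 \<open>rv N Ca Cb = Ok pq\<close> pq Ok kr
            by (cases r) (simp_all add: cube_def rmap_Ok_nil)
        qed (use cs Some_Some c1 r1 r2 \<open>rv N Ca Cb = Ok pq\<close> pq in \<open>simp_all add: cube_def\<close>)
      qed (use cs c1 r1 Ok pq in \<open>simp_all add: cube_def\<close>)
    qed (use cs c1 r1 in \<open>simp_all add: cube_def\<close>)
  qed (use c1 in \<open>simp_all add: cube_def\<close>)
qed

lemma cube_all:
  assumes "\<forall>i. a \<noteq> Si i" "\<forall>i. b \<noteq> Si i" "\<forall>i. c \<noteq> Si i" "a \<noteq> b" "b \<noteq> c" "a \<noteq> c"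
  shows "cube 5 a b c"
proof -
  obtain h where h: "good h {gidx a, gidx b, gidx c}" "h (gidx a) < 5" "h (gidx b) < 5" "h (gidx c) < 5"
    using compress by blast
  have inL: "gm h x \<in> set L5" if "\<forall>i. x \<noteq> Si i" "h (gidx x) < 5" for x
    using that by (cases x) (auto simp: L5_def)
  have "cube 5 (gm h a) (gm h b) (gm h c)"
    apply (rule cube_fin)
    using inL assms h gm_eq[OF h(1)] by auto
  then show ?thesis using cube_gm[OF h(1)] by simp
qed

lemma wc_ctx: "word_cong R u v \<Longrightarrow> word_cong R (p @ u @ q) (p @ v @ q)"
proof (induction rule: word_cong.induct)
  case (step u v p' q')
  then show ?case using word_cong.step[of R u v "p @ p'" "q' @ q"] by simp
qed (auto intro: word_cong.intros)

lemma wc_app: "word_cong R u v \<Longrightarrow> word_cong R u' v' \<Longrightarrow> word_cong R (u @ u') (v @ v')"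
  using wc_ctx[of R u v "[]" u'] wc_ctx[of R u' v' v "[]"] by (auto intro: word_cong.trans)

lemma wc_mono: "word_cong R u v \<Longrightarrow> (\<And>x y. R x y \<Longrightarrow> R' x y) \<Longrightarrow> word_cong R' u v"
  by (induction rule: word_cong.induct) (auto intro: word_cong.intros)

definition ps1 :: "nat \<Rightarrow> word \<Rightarrow> word \<Rightarrow> bool" where
  "ps1 n w w' \<longleftrightarrow> (\<exists>p u v q. (prel n u v \<or> prel n v u) \<and> w = p @ u @ q \<and> w' = p @ v @ q)"

lemma ps1_sym: "ps1 n w w' \<Longrightarrow> ps1 n w' w"
  unfolding ps1_def by blast

lemma ps1s_sym: "(ps1 n)\<^sup>*\<^sup>* u v \<Longrightarrow> (ps1 n)\<^sup>*\<^sup>* v u"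
  by (induction rule: rtranclp_induct) (auto intro: converse_rtranclp_into_rtranclp ps1_sym)

lemma wc_ps1: "word_cong (prel n) u v \<Longrightarrow> (ps1 n)\<^sup>*\<^sup>* u v"
proof (induction rule: word_cong.induct)
  case (step u v p q) then show ?case unfolding ps1_def by blast
next
  case (sym u v)
  then show ?case using ps1s_sym by blast
qed auto

lemma ps1_wc: "(ps1 n)\<^sup>*\<^sup>* u v \<Longrightarrow> word_cong (prel n) u v"
proof (induction rule: rtranclp_induct)
  case base then show ?case by (rule word_cong.refl)
next
  case (step y z)
  then obtain p a b q where "prel n a b \<or> prel n b a" "y = p @ a @ q" "z = p @ b @ q" unfolding ps1_def by blast
  then have "word_cong (prel n) y z" by (auto intro: word_cong.intros)
  then show ?case using step word_cong.trans by blast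
qed

lemma pe_iff: "pos_eq n u v \<longleftrightarrow> (ps1 n)\<^sup>*\<^sup>* u v"
  unfolding pos_eq_def using wc_ps1 ps1_wc by blast

lemma pe_refl[simp]: "pos_eq n u u" unfolding pos_eq_def by (rule word_cong.refl)
lemma pe_sym: "pos_eq n u v \<Longrightarrow> pos_eq n v u" unfolding pos_eq_def by (rule word_cong.sym)
lemma pe_trans: "pos_eq n u v \<Longrightarrow> pos_eq n v w \<Longrightarrow> pos_eq n u w" unfolding pos_eq_def by (rule word_cong.trans)
lemma pe_app: "pos_eq n u v \<Longrightarrow> pos_eq n u' v' \<Longrightarrow> pos_eq n (u @ u') (v @ v')"
  unfolding pos_eq_def by (rule wc_app)
lemma pe_appL: "pos_eq n u v \<Longrightarrow> pos_eq n (p @ u) (p @ v)" using pe_app[OF pe_refl] by blast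
lemma pe_appR: "pos_eq n u v \<Longrightarrow> pos_eq n (u @ q) (v @ q)" using pe_app[OF _ pe_refl] by blast
lemma pe_Cons: "pos_eq n u v \<Longrightarrow> pos_eq n (a # u) (a # v)" using pe_appL[of n u v "[a]"] by simp

definition pv :: "nat \<Rightarrow> word \<Rightarrow> bool" where
  "pv n W \<longleftrightarrow> positive_word W \<and> valid_word n W"

lemma pv_append[simp]: "pv n (u @ v) \<longleftrightarrow> pv n u \<and> pv n v"
  by (auto simp: pv_def positive_word_def valid_word_def)
definition pg :: "nat \<Rightarrow> gen \<Rightarrow> bool" where
  "pg n a \<longleftrightarrow> is_pos_letter a \<and> 1 \<le> gidx a \<and> gidx a \<le> n - 1"

lemma pv_Cons[simp]: "pv n (a # u) \<longleftrightarrow> pg n a \<and> pv n u"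
  by (auto simp: pv_def pg_def positive_word_def valid_word_def)
lemma pv_Nil[simp]: "pv n []" by (simp add: pv_def positive_word_def valid_word_def)

lemma prel_pv: "prel n u v \<Longrightarrow> pv n u \<and> pv n v \<and> length u = length v"
  by (induction rule: prel.induct) (auto simp: pv_def positive_word_def valid_word_def)

lemma ps1_pv: "ps1 n u v \<Longrightarrow> (pv n u \<longleftrightarrow> pv n v) \<and> length u = length v"
  unfolding ps1_def using prel_pv by fastforce

lemma pe_pv: "pos_eq n u v \<Longrightarrow> (pv n u \<longleftrightarrow> pv n v) \<and> length u = length v"
  unfolding pe_iff by (induction rule: rtranclp_induct) (auto dest: ps1_pv)

lemma pe_len: "pos_eq n u v \<Longrightarrow> length u = length v" using pe_pv by blast

section \<open>Complements\<close>

definition vl :: "nat \<Rightarrow> gen \<Rightarrow> bool" where "vl n g \<longleftrightarrow> pv n [g]"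

lemma braid': "1 \<le> i \<Longrightarrow> Suc i \<le> n - 1 \<Longrightarrow> prel n [Sg i, Sg (Suc i), Sg i] [Sg (Suc i), Sg i, Sg (Suc i)]"
  using prel.braid[of i n] by simp
lemma mixed1': "1 \<le> i \<Longrightarrow> Suc i \<le> n - 1 \<Longrightarrow> prel n [Sg i, Sg (Suc i), Xg i] [Xg (Suc i), Sg i, Sg (Suc i)]"
  using prel.mixed1[of i n] by simp
lemma mixed2': "1 \<le> i \<Longrightarrow> Suc i \<le> n - 1 \<Longrightarrow> prel n [Sg (Suc i), Sg i, Xg (Suc i)] [Xg i, Sg (Suc i), Sg i]"
  using prel.mixed2[of i n] by simp

lemma cmp_prel:
  assumes "pg n d" "pg n e" "cmp d e = Some A" "cmp e d = Some B"
  shows "prel n (d # A) (e # B) \<or> prel n (e # B) (d # A)"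
  using assms
  by (cases d; cases e)
     (auto simp: pg_def split: if_splits
        intro: braid' mixed1' mixed2' prel.comm_ss prel.comm_xx prel.comm_xs)

lemma cmp_sound:
  assumes "pg n d" "pg n e" "cmp d e = Some A" "cmp e d = Some B"
  shows "pos_eq n (d # A) (e # B)"
proof -
  have R: "pos_eq n u v" if "prel n u v" for u v
    using word_cong.step[of "prel n" u v "[]" "[]"] that unfolding pos_eq_def by simp
  show ?thesis
    using cmp_prel[OF assms] R pe_sym by blast
qed

lemma cmp_pv: "cmp d e = Some A \<Longrightarrow> pg n d \<Longrightarrow> pg n e \<Longrightarrow> pv n A"
  by (cases d; cases e) (auto simp: pg_def split: if_splits)

lemma cmp_sym: "cmp d e = Some A \<Longrightarrow> \<exists>B. cmp e d = Some B"
  by (cases d; cases e) (auto split: if_splits)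

declare pe_trans[trans]

lemma prel_step0: "prel n u v \<Longrightarrow> u = c # u' \<Longrightarrow> v = b # v' \<Longrightarrow> c \<noteq> b \<and> cmp c b = Some u' \<and> cmp b c = Some v'"
  by (induction rule: prel.induct) auto

lemma prel_ne: "prel n u v \<Longrightarrow> u \<noteq> [] \<and> v \<noteq> []"
  by (induction rule: prel.induct) auto

lemma ps1_cases:
  assumes "ps1 n (c # T) W'"
  shows "(\<exists>V. W' = c # V \<and> ps1 n T V) \<or>
         (\<exists>b F G R. W' = b # (G @ R) \<and> T = F @ R \<and> c \<noteq> b \<and> cmp c b = Some F \<and> cmp b c = Some G)"
proof -
  obtain p u v q where r: "prel n u v \<or> prel n v u" and e: "c # T = p @ u @ q" "W' = p @ v @ q"
    using assms unfolding ps1_def by blast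
  show ?thesis
  proof (cases p)
    case Nil
    have ne: "u \<noteq> [] \<and> v \<noteq> []" using r prel_ne by blast
    then obtain u' v' b where uv: "u = c # u'" "v = b # v'" "T = u' @ q"
      using e Nil by (cases u; cases v) auto
    have "c \<noteq> b \<and> cmp c b = Some u' \<and> cmp b c = Some v'"
      using r prel_step0[of n u v c u' b v'] prel_step0[of n v u b v' c u'] uv by auto
    then show ?thesis using uv e Nil by auto
  next
    case (Cons c' p')
    then have "c' = c" "T = p' @ u @ q" using e by auto
    then have "ps1 n T (p' @ v @ q)" using r unfolding ps1_def by blast
    then show ?thesis using e Cons \<open>c' = c\<close> by auto
  qed
qed

lemma rv_sound:
  "rv N P Q = Ok (P', Q') \<Longrightarrow> pv n P \<Longrightarrow> pv n Q \<Longrightarrow> pos_eq n (P @ Q') (Q @ P') \<and> pv n P' \<and> pv n Q'"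
proof (induction N P Q arbitrary: P' Q' rule: rv.induct)
  case (4 f d P e Q)
  show ?case
  proof (cases "d = e")
    case True
    then show ?thesis using "4.IH"(1)[OF True] "4.prems" by (auto intro: pe_Cons)
  next
    case False
    have pr: "(case (cmp d e, cmp e d) of (Some A, Some B) \<Rightarrow>
       (case rv f P A of Ok (P1, A1) \<Rightarrow>
         (case rv f B Q of Ok (B1, Q1) \<Rightarrow>
            (case rv f P1 Q1 of Ok (P2, Q2) \<Rightarrow> Ok (B1 @ P2, A1 @ Q2) | r \<Rightarrow> r)
          | r \<Rightarrow> r)
        | r \<Rightarrow> r)
     | _ \<Rightarrow> Fail) = Ok (P', Q')" using "4.prems"(1) False by simp
    obtain A where A: "cmp d e = Some A" using pr by (cases "cmp d e") auto
    obtain B where B: "cmp e d = Some B" using pr A by (cases "cmp e d") auto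
    obtain P1 A1 where r1: "rv f P A = Ok (P1, A1)"
      using pr A B by (cases "rv f P A") auto
    obtain B1 Q1 where r2: "rv f B Q = Ok (B1, Q1)"
      using pr A B r1 by (cases "rv f B Q") auto
    obtain P2 Q2 where r3: "rv f P1 Q1 = Ok (P2, Q2)"
      using pr A B r1 r2 by (cases "rv f P1 Q1") auto
    have res: "P' = B1 @ P2" "Q' = A1 @ Q2" using pr A B r1 r2 r3 by simp_all
    have vd: "pg n d" "pv n P" "pg n e" "pv n Q" using "4.prems"(2,3) by auto
    have vA: "pv n A" "pv n B" using cmp_pv A B vd by blast+
    note i1 = "4.IH"(2)[OF False HOL.refl A B r1 vd(2) vA(1)]
    note i2 = "4.IH"(3)[OF False HOL.refl A B _ HOL.refl r2 vA(2) vd(4), OF r1]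
    note i3 = "4.IH"(4)[OF False HOL.refl A B r1 HOL.refl r2 HOL.refl r3] i1 i2
    have s: "pos_eq n (d # A) (e # B)" using cmp_sound[OF vd(1) vd(3) A B] .
    have "pos_eq n (d # P @ A1 @ Q2) (d # A @ P1 @ Q2)"
      using i1 pe_Cons pe_appR[of n "P @ A1" "A @ P1" Q2] by simp
    also have "pos_eq n (d # A @ P1 @ Q2) (d # A @ Q1 @ P2)"
      using i3 pe_Cons pe_appL[of n "P1 @ Q2" "Q1 @ P2" "d # A"] by auto
    also have "pos_eq n (d # A @ Q1 @ P2) (e # B @ Q1 @ P2)"
      using pe_appR[OF s, of "Q1 @ P2"] by simp
    also have "pos_eq n (e # B @ Q1 @ P2) (e # Q @ B1 @ P2)"
      using i2 pe_Cons pe_appR[of n "B @ Q1" "Q @ B1" P2] by simp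
    finally show ?thesis using res i1 i2 i3 by simp
  qed
qed auto

definition Sprop :: "nat \<Rightarrow> nat \<Rightarrow> bool" where
 "Sprop n L \<longleftrightarrow> (\<forall>a b U V. length U = L \<longrightarrow> pv n (a#U) \<longrightarrow> pos_eq n (a#U) (b#V) \<longrightarrow>
     (a = b \<and> pos_eq n U V) \<or>
     (a \<noteq> b \<and> (\<exists>A B Z. cmp a b = Some A \<and> cmp b a = Some B \<and> pos_eq n U (A@Z) \<and> pos_eq n V (B@Z))))"

lemma SpropD:
  assumes "Sprop n (length U)" "pv n (a#U)" "pos_eq n (a#U) (b#V)"
  shows "(a = b \<and> pos_eq n U V) \<or>
     (a \<noteq> b \<and> (\<exists>A B Z. cmp a b = Some A \<and> cmp b a = Some B \<and> pos_eq n U (A@Z) \<and> pos_eq n V (B@Z)))"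
  using assms unfolding Sprop_def by blast

lemma rv_complete:
  assumes S: "\<forall>l<M. Sprop n l"
  shows "pv n (P@X) \<Longrightarrow> length (P@X) \<le> M \<Longrightarrow> pos_eq n (P@X) (Q@Y) \<Longrightarrow>
    rv N P Q \<noteq> Fail \<and> (\<forall>P' Q'. rv N P Q = Ok (P',Q') \<longrightarrow> (\<exists>Z. pos_eq n X (Q'@Z) \<and> pos_eq n Y (P'@Z)))"
proof (induction N P Q arbitrary: X Y rule: rv.induct)
  case (2 f Q)
  have "pos_eq n X (Q @ Y) \<and> pos_eq n Y ([] @ Y)" using "2.prems"(3) by simp
  then show ?case by simp (rule exI[of _ Y], simp)
next
  case (3 f d P)
  have "pos_eq n X ([] @ X) \<and> pos_eq n Y ((d # P) @ X)" using pe_sym[OF "3.prems"(3)] by simp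
  then show ?case by simp (rule exI[of _ X], simp)
next
  case (4 f d P e Q)
  have lt: "length (P @ X) < M" using "4.prems"(2) by simp
  have Sd: "Sprop n (length (P @ X))" using S lt by blast
  have pvd: "pv n (d # P @ X)" using "4.prems"(1) by simp
  have pe0: "pos_eq n (d # P @ X) (e # Q @ Y)" using "4.prems"(3) by simp
  have pvQ: "pv n (e # Q @ Y)" using pe_pv[OF pe0] pvd by blast
  note SD = SpropD[OF Sd pvd pe0]
  show ?case
  proof (cases "d = e")
    case True
    then have "pos_eq n (P @ X) (Q @ Y)" using SD by auto
    then show ?thesis using "4.IH"(1)[OF True, of X Y] "4.prems" True by simp
  next
    case False
    obtain A B Z0 where A: "cmp d e = Some A" and B: "cmp e d = Some B" and
      e1: "pos_eq n (P @ X) (A @ Z0)" and e2: "pos_eq n (Q @ Y) (B @ Z0)"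
      using SD False by blast
    have pvPX: "pv n (P @ X)" using pvd by simp
    have pvAZ: "pv n (A @ Z0)" using pe_pv[OF e1] pvPX by blast
    have pvBZ: "pv n (B @ Z0)" using pe_pv[OF e2] pvQ by auto
    have lA: "length (A @ Z0) = length (P @ X)" using pe_len[OF e1] by simp
    have lB: "length (B @ Z0) = length (P @ X)" using pe_len[OF e2] pe_len[OF pe0] by simp
    note IH2 = "4.IH"(2)[OF False HOL.refl A B pvPX _ e1] 
    have IH2': "rv f P A \<noteq> Fail \<and> (\<forall>P' Q'. rv f P A = Ok (P', Q') \<longrightarrow> (\<exists>Z. pos_eq n X (Q' @ Z) \<and> pos_eq n Z0 (P' @ Z)))"
      using IH2 lt by simp
    show ?thesis
    proof (cases "rv f P A")
      case Fail then show ?thesis using IH2' by simp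
    next
      case NoFuel then show ?thesis using False A B by simp
    next
      case (Ok r1)
      obtain P1 A1 where r1: "rv f P A = Ok (P1, A1)" using Ok by (cases r1) auto
      obtain Z1 where z1: "pos_eq n X (A1 @ Z1)" "pos_eq n Z0 (P1 @ Z1)" using IH2' r1 by blast
      note IH3 = "4.IH"(3)[OF False HOL.refl A B r1 HOL.refl pvBZ _ pe_sym[OF e2]]
      have IH3': "rv f B Q \<noteq> Fail \<and> (\<forall>P' Q'. rv f B Q = Ok (P', Q') \<longrightarrow> (\<exists>Z. pos_eq n Z0 (Q' @ Z) \<and> pos_eq n Y (P' @ Z)))"
        using IH3 lB lt by simp
      show ?thesis
      proof (cases "rv f B Q")
        case Fail then show ?thesis using IH3' by simp
      next
        case NoFuel then show ?thesis using False A B r1 by simp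
      next
        case (Ok r2)
        obtain B1 Q1 where r2: "rv f B Q = Ok (B1, Q1)" using Ok by (cases r2) auto
        obtain Z2 where z2: "pos_eq n Z0 (Q1 @ Z2)" "pos_eq n Y (B1 @ Z2)" using IH3' r2 by blast
        have pvZ0: "pv n Z0" using pvAZ by simp
        have pv1: "pv n (P1 @ Z1)" using pe_pv[OF z1(2)] pvZ0 by blast
        have l1: "length (P1 @ Z1) \<le> M" using pe_len[OF z1(2)] lA lt by simp
        have e3: "pos_eq n (P1 @ Z1) (Q1 @ Z2)" using z1(2) z2(1) pe_sym pe_trans by blast
        note IH4 = "4.IH"(4)[OF False HOL.refl A B r1 HOL.refl r2 HOL.refl pv1 l1 e3]
        show ?thesis
        proof (cases "rv f P1 Q1")
          case Fail then show ?thesis using IH4 by simp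
        next
          case NoFuel then show ?thesis using False A B r1 r2 by simp
        next
          case (Ok r3)
          obtain P2 Q2 where r3: "rv f P1 Q1 = Ok (P2, Q2)" using Ok by (cases r3) auto
          obtain Z3 where z3: "pos_eq n Z1 (Q2 @ Z3)" "pos_eq n Z2 (P2 @ Z3)" using IH4 r3 by blast
          have "pos_eq n X (A1 @ Q2 @ Z3)" using z1(1) pe_appL[OF z3(1), of A1] pe_trans by blast
          moreover have "pos_eq n Y (B1 @ P2 @ Z3)" using z2(2) pe_appL[OF z3(2), of B1] pe_trans by blast
          ultimately show ?thesis using False A B r1 r2 r3 by simp blast
        qed
      qed
    qed
  qed
qed simp

lemma rv_refl: "length P < N \<Longrightarrow> rv N P P = Ok ([], [])"
proof (induction P arbitrary: N)
  case Nil then show ?case by (cases N) auto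
next
  case (Cons x P) then show ?case by (cases N) auto
qed

lemma cmp_len: "cmp d e = Some A \<Longrightarrow> length A \<le> 2"
  by (cases d; cases e) (auto split: if_splits)

lemma pg_notSi: "pg n a \<Longrightarrow> \<forall>i. a \<noteq> Si i"
  by (auto simp: pg_def)

theorem Sprop_all: "Sprop n L"
proof (induction L rule: less_induct)
  case (less L)
  show "Sprop n L" unfolding Sprop_def
  proof (intro allI impI)
    fix a b U V assume lU: "length U = L" and pvU: "pv n (a#U)" and pe: "pos_eq n (a#U) (b#V)"
    define Qp where "Qp c T \<longleftrightarrow> (a = c \<and> pos_eq n U T) \<or> (a \<noteq> c \<and> (\<exists>A C Z. cmp a c = Some A \<and> cmp c a = Some C \<and> pos_eq n U (A@Z) \<and> pos_eq n T (C@Z)))" for c T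
    have chain: "\<exists>c T. W = c#T \<and> Qp c T \<and> pv n W \<and> length T = L" if "(ps1 n)\<^sup>*\<^sup>* (a#U) W" for W
      using that
    proof (induction rule: rtranclp_induct)
      case base then show ?case using pvU lU by (auto simp: Qp_def)
    next
      case (step y z)
      from step.IH obtain c T where y: "y = c # T" and q: "Qp c T" and pvy: "pv n y" and lT: "length T = L" by blast
      have pvz: "pv n z" and lz: "length z = length y" using ps1_pv[OF step.hyps(2)] pvy by auto
      have pga: "pg n a" using pvU by simp
      have pgc: "pg n c" using pvy y by simp
      from ps1_cases[OF step.hyps(2)[unfolded y]]
      show ?case
      proof (elim disjE exE conjE)
        fix V' assume z: "z = c # V'" and s: "ps1 n T V'"
        have "pos_eq n T V'" using s unfolding pe_iff by blast
        then have "Qp c V'" using q unfolding Qp_def using pe_trans pe_sym by metis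
        then show ?thesis using z pvz lz y lT by auto
      next
        fix b' F G R assume z: "z = b' # G @ R" and T: "T = F @ R" and cb: "c \<noteq> b'"
          and F: "cmp c b' = Some F" and G: "cmp b' c = Some G"
        have pgb: "pg n b'" using pvz z by simp
        have lz': "length (G @ R) = L" using lz z y lT by simp
        have "Qp b' (G @ R)"
        proof (cases "a = c")
          case True
          then show ?thesis using q F G T cb unfolding Qp_def by auto
        next
          case False
          obtain A C Z where A: "cmp a c = Some A" and C: "cmp c a = Some C" and
            uz: "pos_eq n U (A@Z)" and tz: "pos_eq n T (C@Z)"
            using q False unfolding Qp_def by blast
          have pvT: "pv n T" using pvy y by simp
          have pvCZ: "pv n (C @ Z)" using pe_pv[OF tz] pvT by blast
          have lCZ: "length (C @ Z) \<le> L" using pe_len[OF tz] lT by simp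
          have eq: "pos_eq n (C @ Z) (F @ R)" using tz T pe_sym by blast
          note RC = rv_complete[OF _ pvCZ lCZ eq, of 5] less.IH
          have RC': "rv 5 C F \<noteq> Fail \<and> (\<forall>P' Q'. rv 5 C F = Ok (P', Q') \<longrightarrow> (\<exists>Z'. pos_eq n Z (Q' @ Z') \<and> pos_eq n R (P' @ Z')))"
            using rv_complete[OF _ pvCZ lCZ eq, of 5] less.IH by blast
          have pvA: "pv n A" using cmp_pv[OF A pga pgc] .
          have pvC: "pv n C" using cmp_pv[OF C pgc pga] .
          have pvF: "pv n F" using cmp_pv[OF F pgc pgb] .
          have pvG: "pv n G" using cmp_pv[OF G pgb pgc] .
          show ?thesis
          proof (cases "a = b'")
            case True
            have "C = F" using C F True by simp
            have "rv 5 C F = Ok ([], [])" using \<open>C = F\<close> rv_refl cmp_len[OF C] by simp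
            then obtain Z' where "pos_eq n Z ([] @ Z')" "pos_eq n R ([] @ Z')" using RC' by blast
            then have "pos_eq n Z Z'" "pos_eq n R Z'" by simp_all
            then have zr: "pos_eq n Z R" by (rule pe_trans[OF _ pe_sym])
            have "G = A" using G A True by simp
            have "pos_eq n U (G @ R)" using uz pe_appL[OF zr, of A] \<open>G = A\<close> pe_trans by blast
            then show ?thesis using True unfolding Qp_def by simp
          next
            case ab: False
            have cu: "cube 5 a b' c"
              using cube_all[OF pg_notSi[OF pga] pg_notSi[OF pgb] pg_notSi[OF pgc] ab cb[symmetric] False] .
            show ?thesis
            proof (cases "rv 5 C F")
              case Fail then show ?thesis using RC' by simp
            next
              case NoFuel then show ?thesis using cu C F A G unfolding cube_def by simp
            next
              case (Ok r)
              obtain P' Q' where r: "rv 5 C F = Ok (P', Q')" using Ok by (cases r) auto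
              obtain Z3 where z3: "pos_eq n Z (Q' @ Z3)" "pos_eq n R (P' @ Z3)" using RC' r by blast
              have sP: "pv n P'" "pv n Q'" using rv_sound[OF r pvC pvF] by auto
              obtain K1 K2 where K1: "cmp a b' = Some K1" and K2: "cmp b' a = Some K2"
                using cu C F A G r unfolding cube_def by (auto split: option.splits)
              obtain k where k1: "rv 5 (A @ Q') K1 = Ok (k, [])" and k2: "rv 5 (G @ P') (K2 @ k) = Ok ([], [])"
                using cu C F A G r K1 K2 unfolding cube_def by (auto split: rres.splits list.splits)
              have pvK: "pv n K1" "pv n K2" using cmp_pv K1 K2 pga pgb by blast+
              have s1: "pos_eq n (A @ Q') (K1 @ k)" and pvk: "pv n k"
                using rv_sound[OF k1] pvA sP pvK by auto
              have s2: "pos_eq n (G @ P') (K2 @ k)"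
                using rv_sound[OF k2] pvG sP pvK pvk by auto
              have "pos_eq n U (A @ Q' @ Z3)" using uz pe_appL[OF z3(1), of A] pe_trans by blast
              also have "pos_eq n (A @ Q' @ Z3) (K1 @ k @ Z3)" using pe_appR[OF s1, of Z3] by simp
              finally have u': "pos_eq n U (K1 @ k @ Z3)" .
              have "pos_eq n (G @ R) (G @ P' @ Z3)" using pe_appL[OF z3(2), of G] .
              also have "pos_eq n (G @ P' @ Z3) (K2 @ k @ Z3)" using pe_appR[OF s2, of Z3] by simp
              finally have v': "pos_eq n (G @ R) (K2 @ k @ Z3)" .
              show ?thesis unfolding Qp_def using ab K1 K2 u' v' by blast
            qed
          qed
        qed
        then show ?thesis using z pvz lz' by auto
      qed
    qed
    obtain c T where "b # V = c # T" "Qp c T" using chain pe unfolding pe_iff by blast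
    then show "(a = b \<and> pos_eq n U V) \<or>
     (a \<noteq> b \<and> (\<exists>A B Z. cmp a b = Some A \<and> cmp b a = Some B \<and> pos_eq n U (A@Z) \<and> pos_eq n V (B@Z)))"
      unfolding Qp_def by auto
  qed
qed

lemma left_cancel: "pv n (P @ U) \<Longrightarrow> pos_eq n (P @ U) (P @ V) \<Longrightarrow> pos_eq n U V"
proof (induction P)
  case Nil then show ?case by simp
next
  case (Cons a P)
  have h1: "pv n (a # (P @ U))" using Cons.prems(1) by simp
  have h2: "pos_eq n (a # (P @ U)) (a # (P @ V))" using Cons.prems(2) by simp
  have "pos_eq n (P @ U) (P @ V)" using SpropD[OF Sprop_all h1 h2] by simp
  then show ?case using Cons by simp
qed

lemma prel_rev: "prel n u v \<Longrightarrow> prel n (rev u) (rev v) \<or> prel n (rev v) (rev u)"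
proof (induction rule: prel.induct)
  case (comm_ss i j) then show ?case using prel.comm_ss[of j n i] by auto
next
  case (comm_xx i j) then show ?case using prel.comm_xx[of j n i] by auto
next
  case (comm_xs i j) then show ?case using prel.comm_xs[of i n j] by auto
next
  case (braid i) then show ?case using prel.braid[of i n] by auto
next
  case (mixed1 i) then show ?case using prel.mixed2[of i n] by auto
next
  case (mixed2 i) then show ?case using prel.mixed1[of i n] by auto
qed

lemma pe_rev: "pos_eq n u v \<Longrightarrow> pos_eq n (rev u) (rev v)"
  unfolding pos_eq_def
proof (induction rule: word_cong.induct)
  case (step u v p q)
  from prel_rev[OF step] show ?case
  proof
    assume "prel n (rev u) (rev v)"
    then show ?thesis using word_cong.step[of "prel n" "rev u" "rev v" "rev q" "rev p"] by simp
  next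
    assume "prel n (rev v) (rev u)"
    then show ?thesis using word_cong.sym[OF word_cong.step[of "prel n" "rev v" "rev u" "rev q" "rev p"]] by simp
  qed
qed (auto intro: word_cong.intros)

lemma pe_rev_iff: "pos_eq n (rev u) (rev v) \<longleftrightarrow> pos_eq n u v"
  using pe_rev[of n "rev u" "rev v"] pe_rev[of n u v] by auto

lemma pv_rev[simp]: "pv n (rev u) \<longleftrightarrow> pv n u"
  by (auto simp: pv_def positive_word_def valid_word_def)

lemma right_cancel: "pv n (U @ P) \<Longrightarrow> pos_eq n (U @ P) (V @ P) \<Longrightarrow> pos_eq n U V"
proof -
  assume a: "pv n (U @ P)" "pos_eq n (U @ P) (V @ P)"
  have "pos_eq n (rev P @ rev U) (rev P @ rev V)" using pe_rev[OF a(2)] by simp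
  moreover have "pv n (rev P @ rev U)" using a(1) by simp
  ultimately have "pos_eq n (rev U) (rev V)" using left_cancel by blast
  then show ?thesis using pe_rev_iff by blast
qed

lemma irel_rev: "irel n u v \<Longrightarrow> irel n (rev u) (rev v)"
  by (induction rule: irel.induct) (auto intro: irel.intros)

lemma sb_rev: "sb_eq n u v \<Longrightarrow> sb_eq n (rev u) (rev v)"
  unfolding sb_eq_def
proof (induction rule: word_cong.induct)
  case (step u v p q)
  from step show ?case
  proof
    assume "prel n u v"
    from prel_rev[OF this] show ?thesis
    proof
      assume "prel n (rev u) (rev v)"
      then show ?thesis using word_cong.step[of "\<lambda>u v. prel n u v \<or> irel n u v" "rev u" "rev v" "rev q" "rev p"] by simp
    next
      assume "prel n (rev v) (rev u)"
      then show ?thesis using word_cong.sym[OF word_cong.step[of "\<lambda>u v. prel n u v \<or> irel n u v" "rev v" "rev u" "rev q" "rev p"]] by simp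
    qed
  next
    assume "irel n u v"
    then show ?thesis using irel_rev word_cong.step[of "\<lambda>u v. prel n u v \<or> irel n u v" "rev u" "rev v" "rev q" "rev p"] by simp
  qed
qed (auto intro: word_cong.intros)

section \<open>The flip automorphism\<close>

fun tau :: "nat \<Rightarrow> gen \<Rightarrow> gen" where
  "tau n (Sg i) = Sg (n - i)" | "tau n (Xg i) = Xg (n - i)" | "tau n (Si i) = Si (n - i)"

lemma prel_tau: "prel n u v \<Longrightarrow> prel n (map (tau n) u) (map (tau n) v) \<or> prel n (map (tau n) v) (map (tau n) u)"
proof (induction rule: prel.induct)
  case (comm_ss i j)
  then have "1 \<le> n - i" "n - i \<le> n - 1" "1 \<le> n - j" "n - j \<le> n - 1" "n - i + 1 < n - j \<or> n - j + 1 < n - i" by linarith+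
  then show ?case using prel.comm_ss[of "n - i" n "n - j"] by simp
next
  case (comm_xx i j)
  then have "1 \<le> n - i" "n - i \<le> n - 1" "1 \<le> n - j" "n - j \<le> n - 1" "n - i + 1 < n - j \<or> n - j + 1 < n - i" by linarith+
  then show ?case using prel.comm_xx[of "n - i" n "n - j"] by simp
next
  case (comm_xs i j)
  then have "1 \<le> n - i" "n - i \<le> n - 1" "1 \<le> n - j" "n - j \<le> n - 1" "n - i \<noteq> n - j + 1" "n - j \<noteq> n - i + 1" by linarith+
  then show ?case using prel.comm_xs[of "n - i" n "n - j"] by simp
next
  case (braid i)
  have e: "n - (i + 1) + 1 = n - i" "1 \<le> n - (i+1)" "n - (i + 1) + 1 \<le> n - 1" using braid by auto
  then show ?case using prel.braid[of "n - (i+1)" n] by (simp add: e)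
next
  case (mixed1 i)
  have e: "n - (i + 1) + 1 = n - i" "1 \<le> n - (i+1)" "n - (i + 1) + 1 \<le> n - 1" using mixed1 by auto
  then show ?case using prel.mixed2[of "n - (i+1)" n] by (simp add: e)
next
  case (mixed2 i)
  have e: "n - (i + 1) + 1 = n - i" "1 \<le> n - (i+1)" "n - (i + 1) + 1 \<le> n - 1" using mixed2 by auto
  then show ?case using prel.mixed1[of "n - (i+1)" n] by (simp add: e)
qed

lemma pe_tau: "pos_eq n u v \<Longrightarrow> pos_eq n (map (tau n) u) (map (tau n) v)"
  unfolding pos_eq_def
proof (induction rule: word_cong.induct)
  case (step u v p q)
  from prel_tau[OF step] show ?case
  proof
    assume "prel n (map (tau n) u) (map (tau n) v)"
    then show ?thesis using word_cong.step[of "prel n" "map (tau n) u" "map (tau n) v" "map (tau n) p" "map (tau n) q"] by simp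
  next
    assume "prel n (map (tau n) v) (map (tau n) u)"
    then show ?thesis using word_cong.sym[OF word_cong.step[of "prel n" "map (tau n) v" "map (tau n) u" "map (tau n) p" "map (tau n) q"]] by simp
  qed
qed (auto intro: word_cong.intros)

lemma pg_tau: "pg n a \<Longrightarrow> pg n (tau n a)"
  by (cases a) (auto simp: pg_def)

lemma tau_tau: "pg n a \<Longrightarrow> tau n (tau n a) = a"
  by (cases a) (auto simp: pg_def)

lemma pv_tau: "pv n W \<Longrightarrow> pv n (map (tau n) W)"
  by (induction W) (auto simp: pg_tau)

lemma tau_tau_map: "pv n W \<Longrightarrow> map (tau n) (map (tau n) W) = W"
  by (induction W) (auto simp: tau_tau)

definition Pi :: "nat \<Rightarrow> word" where "Pi k = map Sg [1..<Suc k]"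

fun lt :: "bool \<Rightarrow> nat \<Rightarrow> gen" where
  "lt True i = Sg i" | "lt False i = Xg i"

lemma Delta_Suc: "Delta (Suc k) = Pi k @ Delta k"
  by (cases k) (auto simp: Delta_def Pi_def)

lemma Delta_0: "Delta 0 = []" by (simp add: Delta_def)
lemma Delta_1: "Delta 1 = []" by (simp add: Delta_def)
lemma Delta_2: "Delta 2 = [Sg 1]" by (simp add: Delta_def numeral_2_eq_2)

lemma set_Pi: "x \<in> set (Pi k) \<Longrightarrow> \<exists>j. x = Sg j \<and> 1 \<le> j \<and> j \<le> k"
  by (auto simp: Pi_def)

lemma set_Delta: "x \<in> set (Delta k) \<Longrightarrow> \<exists>j. x = Sg j \<and> 1 \<le> j \<and> j < k"
proof (induction k)
  case 0 then show ?case by (simp add: Delta_def)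
next
  case (Suc k) then show ?case using set_Pi by (fastforce simp: Delta_Suc)
qed

lemma pv_Delta: "k \<le> n \<Longrightarrow> pv n (Delta k)"
proof -
  assume k: "k \<le> n"
  have "\<forall>x\<in>set (Delta k). pg n x" using set_Delta k by (fastforce simp: pg_def)
  then show ?thesis by (auto simp: pv_def pg_def positive_word_def valid_word_def)
qed

lemma pv_Pi: "k < n \<Longrightarrow> pv n (Pi k)"
  by (auto simp: pv_def Pi_def positive_word_def valid_word_def)

lemma pe_rel: "prel n u v \<Longrightarrow> pos_eq n u v"
  using word_cong.step[of "prel n" u v "[]" "[]"] unfolding pos_eq_def by simp

lemma comm_word:
  assumes "\<forall>b\<in>set W. pos_eq n [a, b] [b, a]"
  shows "pos_eq n (a # W) (W @ [a])"
  using assms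
proof (induction W)
  case Nil then show ?case by simp
next
  case (Cons b W)
  have "pos_eq n (a # b # W) (b # a # W)" using pe_appR[of n "[a,b]" "[b,a]" W] Cons.prems by simp
  also have "pos_eq n (b # a # W) (b # W @ [a])" using Cons pe_Cons by simp
  finally show ?case by simp
qed

lemma comm_lt:
  assumes "1 \<le> i" "i \<le> n - 1" "1 \<le> j" "j \<le> n - 1" "i + 2 \<le> j \<or> j + 2 \<le> i"
  shows "pos_eq n [lt t i, Sg j] [Sg j, lt t i]"
  using assms by (cases t) (auto intro!: pe_rel prel.comm_ss prel.comm_xs)

lemma comm_lt_same:
  assumes "1 \<le> i" "i \<le> n - 1"
  shows "pos_eq n [lt t i, Sg i] [Sg i, lt t i]"
  using assms by (cases t) (auto intro!: pe_rel prel.comm_xs)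

lemma braid_lt:
  assumes "1 \<le> i" "i + 1 \<le> n - 1"
  shows "pos_eq n [lt t (i+1), Sg i, Sg (i+1)] [Sg i, Sg (i+1), lt t i]"
  using assms by (cases t) (auto intro!: pe_sym[OF pe_rel] braid' mixed1')

lemma upt_split3: "1 \<le> i \<Longrightarrow> i + 1 \<le> k \<Longrightarrow> [1..<Suc k] = [1..<i] @ [i, i+1] @ [i+2..<Suc k]"
proof -
  assume a: "1 \<le> i" "i + 1 \<le> k"
  have "[1..<Suc k] = [1..<i] @ [i..<Suc k]" using a upt_add_eq_append[of 1 i "Suc k - i"] by simp
  also have "[i..<Suc k] = i # (i+1) # [i+2..<Suc k]" using a by (simp add: upt_conv_Cons)
  finally show ?thesis by simp
qed

lemma Pi_conj:
  assumes "1 \<le> i" "i + 1 \<le> k" "k \<le> n - 1"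
  shows "pos_eq n (lt t (i+1) # Pi k) (Pi k @ [lt t i])"
proof -
  define A where "A = map Sg [1..<i]"
  define B where "B = map Sg [i+2..<Suc k]"
  have P: "Pi k = A @ [Sg i, Sg (i+1)] @ B" using upt_split3[OF assms(1,2)] by (simp add: Pi_def A_def B_def)
  have cA: "pos_eq n (lt t (i+1) # A) (A @ [lt t (i+1)])"
    by (rule comm_word) (use assms in \<open>auto simp: A_def intro!: comm_lt\<close>)
  have cB: "pos_eq n (lt t i # B) (B @ [lt t i])"
    by (rule comm_word) (use assms in \<open>auto simp: B_def intro!: comm_lt\<close>)
  have "pos_eq n (lt t (i+1) # Pi k) (A @ [lt t (i+1), Sg i, Sg (i+1)] @ B)"
    using pe_appR[OF cA, of "[Sg i, Sg (i+1)] @ B"] by (simp add: P)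
  also have "pos_eq n (A @ [lt t (i+1), Sg i, Sg (i+1)] @ B) (A @ [Sg i, Sg (i+1), lt t i] @ B)"
    using braid_lt[of i n t] assms by (intro pe_appL pe_appR) simp_all
  also have "pos_eq n (A @ [Sg i, Sg (i+1), lt t i] @ B) (A @ [Sg i, Sg (i+1)] @ B @ [lt t i])"
    using pe_appL[OF cB, of "A @ [Sg i, Sg (i+1)]"] by simp
  finally show ?thesis by (simp add: P)
qed

lemma Pi'_conj:
  assumes "1 \<le> i" "i + 1 \<le> k" "k \<le> n - 1"
  shows "pos_eq n (lt t i # rev (Pi k)) (rev (Pi k) @ [lt t (i+1)])"
  using pe_rev[OF Pi_conj[OF assms, of t]] by (simp add: pe_sym)

lemma Delta_split:
  "1 \<le> k \<Longrightarrow> k + 1 \<le> n \<Longrightarrow> pos_eq n (Delta (Suc k)) (Delta k @ rev (Pi k))"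
proof (induction k)
  case 0 then show ?case by simp
next
  case (Suc k)
  show ?case
  proof (cases "k = 0")
    case True then show ?thesis by (simp add: Delta_def Pi_def)
  next
    case False
    have IH: "pos_eq n (Delta (Suc k)) (Delta k @ rev (Pi k))" using Suc False by simp
    have PS: "Pi (Suc k) = Pi k @ [Sg (Suc k)]" by (simp add: Pi_def)
    have c: "pos_eq n (Sg (Suc k) # Delta k) (Delta k @ [Sg (Suc k)])"
      apply (rule comm_word)
      using set_Delta[of _ k] Suc.prems by (fastforce intro!: comm_lt[of "Suc k" n _ True, simplified])
    have "pos_eq n (Delta (Suc (Suc k))) (Pi k @ Sg (Suc k) # Delta k @ rev (Pi k))"
      using pe_appL[OF IH, of "Pi k @ [Sg (Suc k)]"] by (simp add: Delta_Suc[of "Suc k"] PS)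
    also have "pos_eq n (Pi k @ Sg (Suc k) # Delta k @ rev (Pi k)) (Pi k @ Delta k @ Sg (Suc k) # rev (Pi k))"
      using pe_appL[OF pe_appR[OF c, of "rev (Pi k)"], of "Pi k"] by simp
    finally show ?thesis by (simp add: Delta_Suc PS)
  qed
qed

lemma rev_Delta: "k \<le> n \<Longrightarrow> pos_eq n (rev (Delta k)) (Delta k)"
proof (induction k)
  case 0 then show ?case by (simp add: Delta_def)
next
  case (Suc k)
  show ?case
  proof (cases "k = 0")
    case True then show ?thesis by (simp add: Delta_def)
  next
    case False
    have "pos_eq n (rev (Delta (Suc k))) (Delta k @ rev (Pi k))"
      using pe_appR[OF Suc.IH, of "rev (Pi k)"] Suc.prems by (simp add: Delta_Suc)
    also have "pos_eq n (Delta k @ rev (Pi k)) (Delta (Suc k))"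
      using Delta_split[of k n] False Suc.prems by (simp add: pe_sym)
    finally show ?thesis .
  qed
qed

lemma L1_gen:
  "k \<le> n \<Longrightarrow> 1 \<le> i \<Longrightarrow> i + 1 \<le> k \<Longrightarrow> pos_eq n (lt t i # Delta k) (Delta k @ [lt t (k - i)])"
proof (induction k arbitrary: i)
  case 0 then show ?case by simp
next
  case (Suc k)
  show ?case
  proof (cases "k = 1")
    case True
    then have "i = 1" using Suc.prems by simp
    then show ?thesis using True Suc.prems comm_lt_same[of 1 n t] by (simp add: Delta_2[simplified numeral_2_eq_2])
  next
    case k1: False
    show ?thesis
    proof (cases "2 \<le> i")
      case True
      have c1: "pos_eq n (lt t (i - 1 + 1) # Pi k) (Pi k @ [lt t (i - 1)])"
        using Pi_conj[of "i - 1" k n t] True Suc.prems by simp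
      have IH: "pos_eq n (lt t (i - 1) # Delta k) (Delta k @ [lt t (k - (i - 1))])"
        using Suc.IH[of "i - 1"] True Suc.prems by simp
      have "pos_eq n (lt t i # Delta (Suc k)) (Pi k @ lt t (i - 1) # Delta k)"
        using pe_appR[OF c1, of "Delta k"] True by (simp add: Delta_Suc)
      also have "pos_eq n (Pi k @ lt t (i - 1) # Delta k) (Pi k @ Delta k @ [lt t (k - (i - 1))])"
        using pe_appL[OF IH] by simp
      finally show ?thesis using True Suc.prems by (simp add: Delta_Suc Suc_diff_le)
    next
      case False
      then have i1: "i = 1" using Suc.prems by simp
      have k2: "2 \<le> k" using k1 Suc.prems i1 by simp
      have IH: "pos_eq n (lt t 1 # Delta k) (Delta k @ [lt t (k - 1)])"
        using Suc.IH[of 1] k2 Suc.prems by simp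
      have c2: "pos_eq n (lt t (k - 1) # rev (Pi k)) (rev (Pi k) @ [lt t (k - 1 + 1)])"
        using Pi'_conj[of "k - 1" k n t] k2 Suc.prems by simp
      have ds: "pos_eq n (Delta (Suc k)) (Delta k @ rev (Pi k))"
        using Delta_split[of k n] k2 Suc.prems by simp
      have "pos_eq n (lt t 1 # Delta (Suc k)) (lt t 1 # Delta k @ rev (Pi k))"
        using pe_Cons[OF ds] .
      also have "pos_eq n (lt t 1 # Delta k @ rev (Pi k)) (Delta k @ lt t (k - 1) # rev (Pi k))"
        using pe_appR[OF IH, of "rev (Pi k)"] by simp
      also have "pos_eq n (Delta k @ lt t (k - 1) # rev (Pi k)) (Delta k @ rev (Pi k) @ [lt t k])"
        using pe_appL[OF c2, of "Delta k"] k2 by simp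
      also have "pos_eq n (Delta k @ rev (Pi k) @ [lt t k]) (Delta (Suc k) @ [lt t k])"
        using pe_appR[OF pe_sym[OF ds], of "[lt t k]"] by simp
      finally show ?thesis using i1 by simp
    qed
  qed
qed

lemma L1:
  assumes "pg n a"
  shows "pos_eq n (a # Delta n) (Delta n @ [tau n a])"
proof (cases a)
  case (Sg i)
  then show ?thesis using L1_gen[of n n i True] assms by (auto simp: pg_def)
next
  case (Xg i)
  then show ?thesis using L1_gen[of n n i False] assms by (auto simp: pg_def)
next
  case (Si i) then show ?thesis using assms by (simp add: pg_def)
qed

lemma L1_word: "pv n X \<Longrightarrow> pos_eq n (X @ Delta n) (Delta n @ map (tau n) X)"
proof (induction X)
  case Nil then show ?case by simp
next
  case (Cons a X)
  have "pos_eq n ((a # X) @ Delta n) (a # Delta n @ map (tau n) X)"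
    using pe_Cons[OF Cons.IH] Cons.prems by simp
  also have "pos_eq n (a # Delta n @ map (tau n) X) (Delta n @ tau n a # map (tau n) X)"
    using pe_appR[OF L1[of n a], of "map (tau n) X"] Cons.prems by simp
  finally show ?case by simp
qed

lemma tau_Delta: "pos_eq n (map (tau n) (Delta n)) (Delta n)"
proof -
  have "pos_eq n (Delta n @ Delta n) (Delta n @ map (tau n) (Delta n))"
    using L1_word[OF pv_Delta[of n n]] by simp
  then have "pos_eq n (Delta n) (map (tau n) (Delta n))"
    using left_cancel[of n "Delta n" "Delta n"] pv_Delta[of n n] by simp
  then show ?thesis by (rule pe_sym)
qed

lemma right_div_gen:
  "k \<le> n \<Longrightarrow> 1 \<le> i \<Longrightarrow> i + 1 \<le> k \<Longrightarrow> \<exists>D. pv n D \<and> pos_eq n (Delta k) (D @ [Sg i])"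
proof (induction k arbitrary: i)
  case 0 then show ?case by simp
next
  case (Suc k)
  show ?case
  proof (cases "i + 1 \<le> k")
    case True
    then obtain D where D: "pv n D" "pos_eq n (Delta k) (D @ [Sg i])" using Suc by auto
    have "pos_eq n (Delta (Suc k)) ((Pi k @ D) @ [Sg i])"
      using pe_appL[OF D(2), of "Pi k"] by (simp add: Delta_Suc)
    moreover have "pv n (Pi k @ D)" using D pv_Pi[of k n] Suc.prems by simp
    ultimately show ?thesis by blast
  next
    case False
    then have ik: "i = k" "1 \<le> k" using Suc.prems by auto
    have u: "[1..<Suc k] = 1 # [Suc 1..<Suc k]" using ik upt_conv_Cons[of 1 "Suc k"] by simp
    obtain Y where Y: "Delta (Suc k) = Sg 1 # Y"
      using u by (simp add: Delta_Suc Pi_def)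
    have l: "pos_eq n (lt True 1 # Delta (Suc k)) (Delta (Suc k) @ [lt True (Suc k - 1)])"
      using L1_gen[of "Suc k" n 1 True] Suc.prems ik by simp
    have "pos_eq n ([Sg 1] @ (Sg 1 # Y)) ([Sg 1] @ (Y @ [Sg k]))" using l Y by simp
    moreover have "pv n ([Sg 1] @ (Sg 1 # Y))"
      using pv_Delta[of "Suc k" n] Suc.prems Y by simp
    ultimately have "pos_eq n (Sg 1 # Y) (Y @ [Sg k])" using left_cancel by blast
    moreover have "pv n Y" using pv_Delta[of "Suc k" n] Suc.prems Y by simp
    ultimately show ?thesis using Y ik by auto
  qed
qed

lemma right_div: "1 \<le> i \<Longrightarrow> i + 1 \<le> n \<Longrightarrow> \<exists>D. pv n D \<and> pos_eq n (Delta n) (D @ [Sg i])"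
  using right_div_gen by blast

lemma left_div: "1 \<le> i \<Longrightarrow> i + 1 \<le> n \<Longrightarrow> \<exists>E. pv n E \<and> pos_eq n (Delta n) (Sg i # E)"
proof -
  assume a: "1 \<le> i" "i + 1 \<le> n"
  obtain D where D: "pv n D" "pos_eq n (Delta n) (D @ [Sg i])" using right_div[OF a] by blast
  have "pos_eq n (Delta n) (rev (Delta n))" using rev_Delta[of n n] pe_sym by blast
  also have "pos_eq n (rev (Delta n)) (Sg i # rev D)" using pe_rev[OF D(2)] by simp
  finally show ?thesis using D(1) by (intro exI[of _ "rev D"]) simp
qed

lemma sb_refl[simp]: "sb_eq n u u" unfolding sb_eq_def by (rule word_cong.refl)
lemma sb_sym: "sb_eq n u v \<Longrightarrow> sb_eq n v u" unfolding sb_eq_def by (rule word_cong.sym)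
lemma sb_trans[trans]: "sb_eq n u v \<Longrightarrow> sb_eq n v w \<Longrightarrow> sb_eq n u w" unfolding sb_eq_def by (rule word_cong.trans)
lemma sb_app: "sb_eq n u v \<Longrightarrow> sb_eq n u' v' \<Longrightarrow> sb_eq n (u @ u') (v @ v')"
  unfolding sb_eq_def by (rule wc_app)
lemma sb_appL: "sb_eq n u v \<Longrightarrow> sb_eq n (p @ u) (p @ v)" using sb_app[OF sb_refl] by blast
lemma sb_appR: "sb_eq n u v \<Longrightarrow> sb_eq n (u @ q) (v @ q)" using sb_app[OF _ sb_refl] by blast
lemma pe_sb: "pos_eq n u v \<Longrightarrow> sb_eq n u v"
  unfolding pos_eq_def sb_eq_def by (erule wc_mono) simp

lemma sb_irel: "irel n u v \<Longrightarrow> sb_eq n u v"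
  using word_cong.step[of "\<lambda>u v. prel n u v \<or> irel n u v" u v "[]" "[]"] unfolding sb_eq_def by simp

lemma sb_SgSi: "1 \<le> i \<Longrightarrow> i \<le> n - 1 \<Longrightarrow> sb_eq n [Sg i, Si i] []"
  by (rule sb_irel) (rule irel.intros)
lemma sb_SiSg: "1 \<le> i \<Longrightarrow> i \<le> n - 1 \<Longrightarrow> sb_eq n [Si i, Sg i] []"
  by (rule sb_irel) (rule irel.intros(2))

definition sgw :: "nat \<Rightarrow> word \<Rightarrow> bool" where
  "sgw n W \<longleftrightarrow> (\<forall>x\<in>set W. \<exists>i. x = Sg i \<and> 1 \<le> i \<and> i \<le> n - 1)"

lemma winv_Cons: "winv (a # W) = winv W @ [ginv a]" by (simp add: winv_def)
lemma winv_Nil[simp]: "winv [] = []" by (simp add: winv_def)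

lemma sb_winv_r: "sgw n W \<Longrightarrow> sb_eq n (W @ winv W) []"
proof (induction W)
  case Nil then show ?case by simp
next
  case (Cons a W)
  obtain i where a: "a = Sg i" "1 \<le> i" "i \<le> n - 1" using Cons.prems by (auto simp: sgw_def)
  have IH: "sb_eq n (W @ winv W) []" using Cons by (auto simp: sgw_def)
  have "sb_eq n ((a # W) @ winv (a # W)) ([a] @ [] @ [Si i])"
    using sb_appL[OF sb_appR[OF IH, of "[Si i]"], of "[a]"] a by (simp add: winv_Cons)
  also have "sb_eq n ([a] @ [] @ [Si i]) []" using sb_SgSi[OF a(2,3)] a by simp
  finally show ?case .
qed

lemma sb_winv_l: "sgw n W \<Longrightarrow> sb_eq n (winv W @ W) []"
proof (induction W)
  case Nil then show ?case by simp
next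
  case (Cons a W)
  obtain i where a: "a = Sg i" "1 \<le> i" "i \<le> n - 1" using Cons.prems by (auto simp: sgw_def)
  have IH: "sb_eq n (winv W @ W) []" using Cons by (auto simp: sgw_def)
  have "sb_eq n (winv (a # W) @ (a # W)) (winv W @ [] @ W)"
    using sb_appL[OF sb_appR[OF sb_SiSg[OF a(2,3)], of W], of "winv W"] a by (simp add: winv_Cons)
  also have "sb_eq n (winv W @ [] @ W) []" using IH by simp
  finally show ?case .
qed

lemma sgw_Delta: "sgw n (Delta n)"
  using set_Delta[of _ n] by (fastforce simp: sgw_def)

lemma sgw_pv: "sgw n W \<Longrightarrow> pv n W"
  by (induction W) (auto simp: sgw_def pg_def)

lemma sb_valid_step: "prel n u v \<or> irel n u v \<Longrightarrow> valid_word n (p @ u @ q) \<longleftrightarrow> valid_word n (p @ v @ q)"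
proof -
  assume "prel n u v \<or> irel n u v"
  then have "valid_word n u \<and> valid_word n v"
    by (auto elim!: prel.cases irel.cases simp: valid_word_def)
  then show ?thesis by (auto simp: valid_word_def)
qed

lemma sb_valid: "sb_eq n u v \<Longrightarrow> valid_word n u \<longleftrightarrow> valid_word n v"
  unfolding sb_eq_def
  by (induction rule: word_cong.induct) (use sb_valid_step in blast)+

section \<open>The map psi\<close>

definition tp :: "nat \<Rightarrow> nat \<Rightarrow> word \<Rightarrow> word" where
  "tp n K W = (if even K then W else map (tau n) W)"

definition Dd :: "nat \<Rightarrow> nat \<Rightarrow> word" where
  "Dd n i = (SOME D. pv n D \<and> pos_eq n (Delta n) (D @ [Sg i]))"

definition DP :: "nat \<Rightarrow> nat \<Rightarrow> word" where
  "DP n K = concat (replicate K (Delta n))"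

fun psi :: "nat \<Rightarrow> nat \<Rightarrow> word \<Rightarrow> word" where
  "psi n K [] = DP n K"
| "psi n K (Si i # W) = tp n (K - 1) (Dd n i) @ psi n (K - 1) W"
| "psi n K (Sg i # W) = tp n K [Sg i] @ psi n K W"
| "psi n K (Xg i # W) = tp n K [Xg i] @ psi n K W"

fun pre :: "nat \<Rightarrow> nat \<Rightarrow> word \<Rightarrow> word" where
  "pre n K [] = []"
| "pre n K (Si i # W) = tp n (K - 1) (Dd n i) @ pre n (K - 1) W"
| "pre n K (Sg i # W) = tp n K [Sg i] @ pre n K W"
| "pre n K (Xg i # W) = tp n K [Xg i] @ pre n K W"

fun cnt :: "word \<Rightarrow> nat" where
  "cnt [] = 0" | "cnt (Si i # W) = Suc (cnt W)" | "cnt (Sg i # W) = cnt W" | "cnt (Xg i # W) = cnt W"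

lemma cnt_app[simp]: "cnt (u @ v) = cnt u + cnt v"
  by (induction u rule: cnt.induct) auto

lemma psi_app: "psi n K (p @ X) = pre n K p @ psi n (K - cnt p) X"
proof (induction n K p rule: pre.induct)
  case (2 n K i W)
  have "K - Suc (cnt W) = K - 1 - cnt W" by arith
  then show ?case using 2 by simp
qed simp_all

lemma tp_app: "tp n K (u @ v) = tp n K u @ tp n K v" by (simp add: tp_def)
lemma tp_Cons: "tp n K (a # v) = tp n K [a] @ tp n K v" by (simp add: tp_def)

lemma pre_pos: "positive_word p \<Longrightarrow> pre n K p = tp n K p"
proof (induction n K p rule: pre.induct)
  case (2 n K i W) then show ?case by (simp add: positive_word_def)
next
  case (3 n K i W) then show ?case by (simp add: positive_word_def tp_Cons[of n K _ W])
next
  case (4 n K i W) then show ?case by (simp add: positive_word_def tp_Cons[of n K _ W])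
qed (simp add: tp_def)

lemma cnt_pos: "positive_word p \<Longrightarrow> cnt p = 0"
  by (induction p rule: cnt.induct) (auto simp: positive_word_def)

lemma psi_pos_app: "positive_word p \<Longrightarrow> psi n K (p @ X) = tp n K p @ psi n K X"
  using psi_app[of n K p X] pre_pos cnt_pos by simp

lemma Dd: "1 \<le> i \<Longrightarrow> i + 1 \<le> n \<Longrightarrow> pv n (Dd n i) \<and> pos_eq n (Delta n) (Dd n i @ [Sg i])"
  unfolding Dd_def by (rule someI_ex) (rule right_div)

lemma pv_tp: "pv n W \<Longrightarrow> pv n (tp n K W)" by (simp add: tp_def pv_tau)

lemma pe_tp: "pos_eq n u v \<Longrightarrow> pos_eq n (tp n K u) (tp n K v)" by (simp add: tp_def pe_tau)

lemma pv_DP: "pv n (DP n K)"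
  by (induction K) (auto simp: DP_def pv_Delta)

lemma pv_psi: "valid_word n W \<Longrightarrow> pv n (psi n K W)"
proof (induction n K W rule: psi.induct)
  case (2 n K i W)
  then have "1 \<le> i" "i + 1 \<le> n" by (auto simp: valid_word_def)
  then show ?case using 2 Dd pv_tp by (auto simp: valid_word_def)
next
  case (3 n K i W) then show ?case using pv_tp[of n "[Sg i]" K] by (auto simp: valid_word_def pg_def)
next
  case (4 n K i W) then show ?case using pv_tp[of n "[Xg i]" K] by (auto simp: valid_word_def pg_def)
qed (simp add: pv_DP)

lemma tpD: "pv n X \<Longrightarrow> pos_eq n (tp n (Suc K) X @ Delta n) (Delta n @ tp n K X)"
proof (cases "even K")
  case True
  assume X: "pv n X"
  have "pos_eq n (map (tau n) X @ Delta n) (Delta n @ map (tau n) (map (tau n) X))"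
    using L1_word[OF pv_tau[OF X]] .
  then show ?thesis using True tau_tau_map[OF X] by (simp add: tp_def)
next
  case False
  assume X: "pv n X"
  then show ?thesis using False L1_word[OF X] by (simp add: tp_def)
qed

lemma tp_Delta: "pos_eq n (tp n K (Delta n)) (Delta n)"
  by (simp add: tp_def tau_Delta)

lemma DP_Suc: "DP n (Suc K) = Delta n @ DP n K" by (simp add: DP_def)

lemma psi_Suc: "valid_word n W \<Longrightarrow> cnt W \<le> K \<Longrightarrow> pos_eq n (psi n (Suc K) W) (Delta n @ psi n K W)"
proof (induction W arbitrary: K)
  case Nil then show ?case by (simp add: DP_Suc)
next
  case (Cons a W)
  show ?case
  proof (cases a)
    case (Si i)
    then obtain K' where K: "K = Suc K'" using Cons.prems by (cases K) auto
    have i: "1 \<le> i" "i + 1 \<le> n" using Cons.prems Si by (auto simp: valid_word_def)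
    have IH: "pos_eq n (psi n K W) (Delta n @ psi n K' W)" using Cons Si K by (simp add: valid_word_def)
    have "pos_eq n (psi n (Suc K) (a # W)) (tp n K (Dd n i) @ Delta n @ psi n K' W)"
      using pe_appL[OF IH] Si by simp
    also have "pos_eq n (tp n K (Dd n i) @ Delta n @ psi n K' W) (Delta n @ tp n K' (Dd n i) @ psi n K' W)"
      using pe_appR[OF tpD[OF conjunct1[OF Dd[OF i]], of K'], of "psi n K' W"] K by simp
    finally show ?thesis using Si K by simp
  next
    case (Sg i)
    have p: "pg n a" using Cons.prems Sg by (auto simp: valid_word_def pg_def)
    have IH: "pos_eq n (psi n (Suc K) W) (Delta n @ psi n K W)" using Cons Sg by (simp add: valid_word_def)
    have "pos_eq n (psi n (Suc K) (a # W)) (tp n (Suc K) [a] @ Delta n @ psi n K W)"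
      using pe_appL[OF IH] Sg by simp
    also have "pos_eq n (tp n (Suc K) [a] @ Delta n @ psi n K W) (Delta n @ tp n K [a] @ psi n K W)"
      using pe_appR[OF tpD[of n "[a]" K], of "psi n K W"] p by simp
    finally show ?thesis using Sg by simp
  next
    case (Xg i)
    have p: "pg n a" using Cons.prems Xg by (auto simp: valid_word_def pg_def)
    have IH: "pos_eq n (psi n (Suc K) W) (Delta n @ psi n K W)" using Cons Xg by (simp add: valid_word_def)
    have "pos_eq n (psi n (Suc K) (a # W)) (tp n (Suc K) [a] @ Delta n @ psi n K W)"
      using pe_appL[OF IH] Xg by simp
    also have "pos_eq n (tp n (Suc K) [a] @ Delta n @ psi n K W) (Delta n @ tp n K [a] @ psi n K W)"
      using pe_appR[OF tpD[of n "[a]" K], of "psi n K W"] p by simp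
    finally show ?thesis using Xg by simp
  qed
qed

lemma valid_app[simp]: "valid_word n (u @ v) \<longleftrightarrow> valid_word n u \<and> valid_word n v"
  by (auto simp: valid_word_def)

lemma tp_Suc_single: "pg n a \<Longrightarrow> tp n (Suc J) [a] = tp n J [tau n a]"
  by (auto simp: tp_def tau_tau)

lemma tauSg_D:
  assumes i: "1 \<le> i" "i + 1 \<le> n"
  shows "pos_eq n (tau n (Sg i) # Dd n i) (Delta n)"
proof -
  have D: "pv n (Dd n i)" "pos_eq n (Delta n) (Dd n i @ [Sg i])" using Dd[OF i] by auto
  have pgs: "pg n (Sg i)" using i by (simp add: pg_def)
  have "pos_eq n ((tau n (Sg i) # Dd n i) @ [Sg i]) (tau n (Sg i) # Delta n)"
    using pe_Cons[OF pe_sym[OF D(2)]] by simp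
  also have "pos_eq n (tau n (Sg i) # Delta n) (Delta n @ [tau n (tau n (Sg i))])"
    using L1[OF pg_tau[OF pgs]] .
  finally have "pos_eq n ((tau n (Sg i) # Dd n i) @ [Sg i]) (Delta n @ [Sg i])"
    using tau_tau[OF pgs] by simp
  moreover have "pv n ((tau n (Sg i) # Dd n i) @ [Sg i])" using D pgs pg_tau[OF pgs] by simp
  ultimately show ?thesis using right_cancel by blast
qed

lemma psi_rel:
  assumes R: "prel n u v \<or> irel n u v" and vq: "valid_word n q"
    and K: "cnt (u @ q) \<le> K" "cnt (v @ q) \<le> K"
  shows "pos_eq n (psi n K (u @ q)) (psi n K (v @ q))"
  using R
proof
  assume p: "prel n u v"
  have "pv n u" "pv n v" using prel_pv[OF p] by auto
  then have "positive_word u" "positive_word v" by (auto simp: pv_def)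
  then show ?thesis using psi_pos_app pe_appR[OF pe_tp[OF pe_rel[OF p]]] by metis
next
  assume "irel n u v"
  then show ?thesis
  proof (cases rule: irel.cases)
    case (1 i)
    then obtain J where J: "K = Suc J" using K by (cases K) auto
    have cq: "cnt q \<le> J" using K J 1 by simp
    have i: "1 \<le> i" "i + 1 \<le> n" using 1 by auto
    have pgs: "pg n (Sg i)" using i by (simp add: pg_def)
    have "psi n K (u @ q) = tp n J (tau n (Sg i) # Dd n i) @ psi n J q"
      using 1 J tp_Suc_single[OF pgs, of J] by (simp add: tp_def)
    also have "pos_eq n (tp n J (tau n (Sg i) # Dd n i) @ psi n J q) (Delta n @ psi n J q)"
      using pe_appR[OF pe_trans[OF pe_tp[OF tauSg_D[OF i]] tp_Delta]] .
    also have "pos_eq n (Delta n @ psi n J q) (psi n K (v @ q))"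
      using pe_sym[OF psi_Suc[OF vq cq]] J 1 by simp
    finally show ?thesis .
  next
    case (2 i)
    then obtain J where J: "K = Suc J" using K by (cases K) auto
    have cq: "cnt q \<le> J" using K J 2 by simp
    have i: "1 \<le> i" "i + 1 \<le> n" using 2 by auto
    have "psi n K (u @ q) = tp n J (Dd n i @ [Sg i]) @ psi n J q"
      using 2 J by (simp add: tp_def)
    also have "pos_eq n (tp n J (Dd n i @ [Sg i]) @ psi n J q) (Delta n @ psi n J q)"
      using pe_appR[OF pe_trans[OF pe_tp[OF pe_sym[OF conjunct2[OF Dd[OF i]]]] tp_Delta]] .
    also have "pos_eq n (Delta n @ psi n J q) (psi n K (v @ q))"
      using pe_sym[OF psi_Suc[OF vq cq]] J 2 by simp
    finally show ?thesis .
  qed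
qed

lemma psi_step:
  assumes R: "prel n u v \<or> irel n u v" and v: "valid_word n (p @ u @ q)"
    and K: "cnt (p @ u @ q) \<le> K" "cnt (p @ v @ q) \<le> K"
  shows "pos_eq n (psi n K (p @ u @ q)) (psi n K (p @ v @ q))"
proof -
  have vq: "valid_word n q" using v by (simp add: valid_word_def)
  have "pos_eq n (psi n (K - cnt p) (u @ q)) (psi n (K - cnt p) (v @ q))"
    using psi_rel[OF R vq] K by simp
  then show ?thesis using psi_app[of n K p "u @ q"] psi_app[of n K p "v @ q"] pe_appL by metis
qed

lemma psi_sb_ex: "word_cong (\<lambda>u v. prel n u v \<or> irel n u v) W1 W2 \<Longrightarrow> valid_word n W1 \<Longrightarrow> \<exists>K0. \<forall>K\<ge>K0. pos_eq n (psi n K W1) (psi n K W2)"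
proof (induction rule: word_cong.induct)
  case (step u v p q)
  then show ?case using psi_step[OF step(1) step(2)] by (intro exI[of _ "cnt (p @ u @ q) + cnt (p @ v @ q)"]) auto
next
  case (refl w) then show ?case by auto
next
  case (sym u v)
  have "valid_word n u" using sb_valid[unfolded sb_eq_def, OF sym(1)] sym(3) by simp
  then show ?case using sym(2) pe_sym by blast
next
  case (trans u v w)
  have vv: "valid_word n v" using sb_valid[unfolded sb_eq_def, OF trans(1)] trans(5) by simp
  obtain K1 where K1: "\<forall>K\<ge>K1. pos_eq n (psi n K u) (psi n K v)" using trans(3)[OF trans(5)] by blast
  obtain K2 where K2: "\<forall>K\<ge>K2. pos_eq n (psi n K v) (psi n K w)" using trans(4)[OF vv] by blast
  show ?case using K1 K2 pe_trans by (intro exI[of _ "max K1 K2"]) auto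
qed

lemma psi_down:
  assumes v: "valid_word n W1" "valid_word n W2" and c: "cnt W1 \<le> K" "cnt W2 \<le> K"
    and e: "pos_eq n (psi n (K + j) W1) (psi n (K + j) W2)"
  shows "pos_eq n (psi n K W1) (psi n K W2)"
  using e
proof (induction j)
  case 0 then show ?case by simp
next
  case (Suc j)
  have s1: "pos_eq n (psi n (Suc (K+j)) W1) (Delta n @ psi n (K+j) W1)" using psi_Suc[OF v(1)] c by simp
  have s2: "pos_eq n (psi n (Suc (K+j)) W2) (Delta n @ psi n (K+j) W2)" using psi_Suc[OF v(2)] c by simp
  have s3: "pos_eq n (psi n (Suc (K+j)) W1) (psi n (Suc (K+j)) W2)" using Suc.prems by simp
  have "pos_eq n (Delta n @ psi n (K + j) W1) (Delta n @ psi n (K + j) W2)"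
    using pe_trans[OF pe_sym[OF s1] pe_trans[OF s3 s2]] .
  then have "pos_eq n (psi n (K + j) W1) (psi n (K + j) W2)"
    using left_cancel pv_psi[OF v(1)] pv_Delta[of n n] by (metis order_refl pv_append)
  then show ?case using Suc.IH by blast
qed

lemma psi_sb:
  assumes "sb_eq n W1 W2" "valid_word n W1" "cnt W1 \<le> K" "cnt W2 \<le> K"
  shows "pos_eq n (psi n K W1) (psi n K W2)"
proof -
  obtain K0 where K0: "\<forall>K\<ge>K0. pos_eq n (psi n K W1) (psi n K W2)" using psi_sb_ex[OF assms(1)[unfolded sb_eq_def] assms(2)] by blast
  have v2: "valid_word n W2" using sb_valid[OF assms(1)] assms(2) by simp
  show ?thesis using psi_down[OF assms(2) v2 assms(3,4), of K0] K0 by simp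
qed

lemma DP_add: "DP n (a + b) = DP n a @ DP n b" by (simp add: DP_def replicate_add)

lemma psi_posA: "pv n A \<Longrightarrow> pos_eq n (psi n K A) (DP n K @ A)"
proof -
  assume A: "pv n A"
  have p: "positive_word A" using A by (simp add: pv_def)
  have "psi n K A = tp n K A @ DP n K" using psi_pos_app[OF p, of n K "[]"] by simp
  moreover have "pos_eq n (tp n K A @ DP n K) (DP n K @ A)"
  proof (induction K)
    case 0 then show ?case by (simp add: tp_def DP_def)
  next
    case (Suc K)
    have "pos_eq n (tp n (Suc K) A @ DP n (Suc K)) (Delta n @ tp n K A @ DP n K)"
      using pe_appR[OF tpD[OF A, of K], of "DP n K"] by (simp add: DP_Suc)
    also have "pos_eq n (Delta n @ tp n K A @ DP n K) (DP n (Suc K) @ A)"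
      using pe_appL[OF Suc.IH, of "Delta n"] by (simp add: DP_Suc)
    finally show ?case .
  qed
  ultimately show ?thesis by simp
qed

definition NP :: "nat \<Rightarrow> nat \<Rightarrow> word" where "NP n j = concat (replicate j (winv (Delta n)))"

lemma cnt_winv: "sgw n W \<Longrightarrow> cnt (winv W) = length W"
  by (induction W) (auto simp: sgw_def winv_Cons)

lemma valid_winv: "sgw n W \<Longrightarrow> valid_word n (winv W)"
  by (induction W) (auto simp: sgw_def winv_Cons valid_word_def)

lemma len_Delta: "2 \<le> n \<Longrightarrow> 1 \<le> length (Delta n)"
proof -
  assume n: "2 \<le> n"
  obtain k where k: "n = Suc k" "1 \<le> k" using n by (cases n) auto
  then show ?thesis by (simp add: Delta_Suc Pi_def)
qed

lemma psi_winv: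
  assumes n: "2 \<le> n" and vY: "valid_word n Y" and K: "length (Delta n) + cnt Y \<le> K"
  shows "pos_eq n (psi n K (winv (Delta n) @ Y)) (psi n (K - 1) Y)"
proof -
  have sg: "sgw n (Delta n)" by (rule sgw_Delta)
  have sb: "sb_eq n (Delta n @ winv (Delta n) @ Y) Y"
    using sb_appR[OF sb_winv_r[OF sg], of Y] by simp
  have vD: "valid_word n (Delta n)" using pv_Delta[of n n] by (simp add: pv_def)
  have vW: "valid_word n (winv (Delta n) @ Y)" using valid_winv[OF sg] vY by simp
  have v1: "valid_word n (Delta n @ winv (Delta n) @ Y)" using vD vW by simp
  have pD: "positive_word (Delta n)" using pv_Delta[of n n] by (simp add: pv_def)
  have c1: "cnt (Delta n @ winv (Delta n) @ Y) \<le> K" using K cnt_winv[OF sg] cnt_pos[OF pD] by simp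
  have e1: "pos_eq n (psi n K (Delta n @ winv (Delta n) @ Y)) (psi n K Y)"
    using psi_sb[OF sb v1 c1] K by simp
  have e2: "pos_eq n (Delta n @ psi n K (winv (Delta n) @ Y)) (psi n K (Delta n @ winv (Delta n) @ Y))"
    using psi_pos_app[OF pD, of n K "winv (Delta n) @ Y"] pe_appR[OF pe_sym[OF tp_Delta[of n K]]] by metis
  obtain J where J: "K = Suc J" "cnt Y \<le> J" using K len_Delta[OF n] by (cases K) auto
  have e3: "pos_eq n (psi n K Y) (Delta n @ psi n (K - 1) Y)" using psi_Suc[OF vY J(2)] J by simp
  have "pos_eq n (Delta n @ psi n K (winv (Delta n) @ Y)) (Delta n @ psi n (K - 1) Y)"
    using pe_trans[OF e2 pe_trans[OF e1 e3]] .
  then show ?thesis using left_cancel pv_psi[OF vW] pv_Delta[of n n] by (metis order_refl pv_append)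
qed

lemma psi_NP:
  assumes n: "2 \<le> n" and vY: "valid_word n Y" and K: "j * length (Delta n) + cnt Y \<le> K"
  shows "pos_eq n (psi n K (NP n j @ Y)) (psi n (K - j) Y)"
  using K
proof (induction j arbitrary: K)
  case 0 then show ?case by (simp add: NP_def)
next
  case (Suc j)
  have sg: "sgw n (Delta n)" by (rule sgw_Delta)
  have vNY: "valid_word n (NP n j @ Y)"
    using valid_winv[OF sg] vY by (induction j) (auto simp: NP_def)
  have cNY: "cnt (NP n j @ Y) = j * length (Delta n) + cnt Y"
    using cnt_winv[OF sg] by (induction j) (auto simp: NP_def)
  have "psi n K (NP n (Suc j) @ Y) = psi n K (winv (Delta n) @ (NP n j @ Y))" by (simp add: NP_def)
  also have "pos_eq n (psi n K (winv (Delta n) @ (NP n j @ Y))) (psi n (K - 1) (NP n j @ Y))"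
    using psi_winv[OF n vNY] Suc.prems cNY by simp
  also have "pos_eq n (psi n (K - 1) (NP n j @ Y)) (psi n (K - 1 - j) Y)"
  proof -
    have "Suc j * length (Delta n) + cnt Y \<le> K" using Suc.prems .
    then have "j * length (Delta n) + cnt Y \<le> K - 1" using len_Delta[OF n] by (simp add: algebra_simps)
    then show ?thesis using Suc.IH[of "K - 1"] by simp
  qed
  finally have r: "pos_eq n (psi n K (NP n (Suc j) @ Y)) (psi n (K - 1 - j) Y)" .
  have "K - 1 - j = K - Suc j" by arith
  then show ?case using r by simp
qed

lemma Dpow_nonneg: "0 \<le> m \<Longrightarrow> Delta_pow n m = DP n (nat m)"
  by (simp add: Delta_pow_def DP_def)

lemma Dpow_neg: "m < 0 \<Longrightarrow> Delta_pow n m = NP n (nat (- m))"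
  by (simp add: Delta_pow_def NP_def)

lemma cnt_NP: "cnt (NP n j) = j * length (Delta n)"
  using cnt_winv[OF sgw_Delta] by (induction j) (auto simp: NP_def)

lemma cnt_DP: "cnt (DP n j) = 0"
  using cnt_pos pv_DP by (auto simp: pv_def)

lemma valid_NP: "valid_word n (NP n j)"
  using valid_winv[OF sgw_Delta] by (induction j) (auto simp: NP_def valid_word_def)

lemma valid_DP: "valid_word n (DP n j)"
  using pv_DP by (simp add: pv_def)

lemma valid_Dpow: "valid_word n (Delta_pow n m)"
  by (cases "0 \<le> m") (auto simp: Dpow_nonneg Dpow_neg valid_NP valid_DP)

lemma cnt_Dpow: "cnt (Delta_pow n m) = nat (- m) * length (Delta n)"
  by (cases "0 \<le> m") (auto simp: Dpow_nonneg Dpow_neg cnt_NP cnt_DP)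

lemma psi_dpow:
  assumes n: "2 \<le> n" and A: "pv n A" and K: "nat (- m) * length (Delta n) \<le> K"
  shows "pos_eq n (psi n K (Delta_pow n m @ A)) (DP n (nat (int K + m)) @ A)"
proof (cases "0 \<le> m")
  case True
  have "pos_eq n (psi n K (DP n (nat m) @ A)) (DP n K @ DP n (nat m) @ A)"
    using psi_posA[of n "DP n (nat m) @ A" K] A pv_DP by simp
  moreover have "nat (int K + m) = K + nat m" using True by simp
  ultimately show ?thesis using True by (simp add: Dpow_nonneg DP_add)
next
  case False
  let ?j = "nat (- m)"
  have vA: "valid_word n A" using A by (simp add: pv_def)
  have cA: "cnt A = 0" using A cnt_pos by (simp add: pv_def)
  have e1: "pos_eq n (psi n K (NP n ?j @ A)) (psi n (K - ?j) A)"
    using psi_NP[OF n vA, of ?j K] K cA by simp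
  have jK: "?j \<le> K" using K len_Delta[OF n] by (metis le_trans mult.right_neutral mult_le_mono2)
  have "nat (int K + m) = K - ?j" using False jK by simp
  then show ?thesis using e1 psi_posA[OF A, of "K - ?j"] False pe_trans by (simp add: Dpow_neg)
qed

definition ndL :: "nat \<Rightarrow> word \<Rightarrow> bool" where
  "ndL n X \<longleftrightarrow> \<not> (\<exists>Z. positive_word Z \<and> pos_eq n X (Delta n @ Z))"

definition ndR :: "nat \<Rightarrow> word \<Rightarrow> bool" where
  "ndR n X \<longleftrightarrow> \<not> (\<exists>Z. positive_word Z \<and> pos_eq n X (Z @ Delta n))"

lemma DP_cancel1:
  assumes A: "pv n A" "pv n A'" and nd: "ndL n A" and e: "pos_eq n (DP n a @ A) (DP n (a + d) @ A')"
  shows "d = 0 \<and> pos_eq n A A'"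
proof -
  have "pos_eq n (DP n a @ A) (DP n a @ (DP n d @ A'))" using e by (simp add: DP_add)
  then have e2: "pos_eq n A (DP n d @ A')" using left_cancel pv_DP A by (metis pv_append)
  show ?thesis
  proof (cases d)
    case 0 then show ?thesis using e2 by (simp add: DP_def)
  next
    case (Suc d')
    have "pos_eq n A (Delta n @ (DP n d' @ A'))" using e2 Suc by (simp add: DP_Suc)
    moreover have "positive_word (DP n d' @ A')" using pv_DP[of n d'] A by (auto simp: pv_def positive_word_def)
    ultimately show ?thesis using nd unfolding ndL_def by blast
  qed
qed

lemma DP_cancel:
  assumes A: "pv n A" "pv n A'" and nd: "ndL n A" "ndL n A'" and e: "pos_eq n (DP n a @ A) (DP n a' @ A')"
  shows "a = a' \<and> pos_eq n A A'"
proof (cases "a \<le> a'")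
  case True
  then obtain d where "a' = a + d" using le_Suc_ex by blast
  then show ?thesis using DP_cancel1[OF A nd(1)] e by auto
next
  case False
  then obtain d where "a = a' + d" using le_Suc_ex[of a' a] by auto
  then show ?thesis using DP_cancel1[OF A(2,1) nd(2)] pe_sym[OF e] pe_sym by auto
qed

lemma UNIQ:
  assumes n: "2 \<le> n" and A: "pv n A" "pv n A'" and nd: "ndL n A" "ndL n A'"
    and e: "sb_eq n (Delta_pow n m @ A) (Delta_pow n m' @ A')"
  shows "m = m' \<and> pos_eq n A A'"
proof -
  let ?N = "length (Delta n)"
  define K where "K = (nat (- m) + nat (- m')) * ?N"
  have cA: "cnt A = 0" "cnt A' = 0" using A cnt_pos by (auto simp: pv_def)
  have v1: "valid_word n (Delta_pow n m @ A)" using valid_Dpow A by (simp add: pv_def)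
  have K1: "nat (- m) * ?N \<le> K" "nat (- m') * ?N \<le> K" unfolding K_def by (simp_all add: algebra_simps)
  have "pos_eq n (psi n K (Delta_pow n m @ A)) (psi n K (Delta_pow n m' @ A'))"
    using psi_sb[OF e v1] K1 cA cnt_Dpow by simp
  then have "pos_eq n (DP n (nat (int K + m)) @ A) (DP n (nat (int K + m')) @ A')"
    using psi_dpow[OF n A(1) K1(1)] psi_dpow[OF n A(2) K1(2)] pe_trans pe_sym by metis
  then have r: "nat (int K + m) = nat (int K + m') \<and> pos_eq n A A'" using DP_cancel[OF A nd] by blast
  have "int K + m \<ge> 0" "int K + m' \<ge> 0" using K1 len_Delta[OF n]
    by (smt (verit) int_nat_eq mult_le_mono2 mult.right_neutral of_nat_mono le_trans)+
  then have "int K + m = int K + m'" using r by (metis nat_eq_iff2)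
  then show ?thesis using r by simp
qed

section \<open>Existence\<close>

lemma concat_rep_snoc: "concat (replicate j X) @ X = concat (replicate (Suc j) X)"
  by (induction j) auto

lemma Dpow_winv: "sb_eq n (Delta_pow n m @ winv (Delta n)) (Delta_pow n (m - 1))"
proof (cases "m \<le> 0")
  case True
  have "Delta_pow n m @ winv (Delta n) = concat (replicate (Suc (nat (- m))) (winv (Delta n)))"
    using True concat_rep_snoc[of "nat (- m)" "winv (Delta n)"]
    by (cases "m = 0") (auto simp: Delta_pow_def)
  moreover have "Delta_pow n (m - 1) = concat (replicate (Suc (nat (- m))) (winv (Delta n)))"
    using True by (simp add: Delta_pow_def nat_diff_distrib' Suc_nat_eq_nat_zadd1)
  ultimately show ?thesis by simp
next
  case False
  obtain j where j: "nat m = Suc j" using False by (cases "nat m") auto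
  have "Delta_pow n m = DP n j @ Delta n" using False j concat_rep_snoc[of j "Delta n"] by (simp add: Delta_pow_def DP_def)
  moreover have "Delta_pow n (m - 1) = DP n j" using False j by (simp add: Delta_pow_def DP_def nat_diff_distrib')
  ultimately show ?thesis using sb_appL[where p="DP n j", OF sb_winv_r[OF sgw_Delta]] by simp
qed

lemma Dpow_Delta: "sb_eq n (Delta_pow n m @ Delta n) (Delta_pow n (m + 1))"
proof (cases "m < 0")
  case True
  obtain j where j: "nat (- m) = Suc j" using True by (cases "nat (- m)") auto
  have mj: "- m = int j + 1" using j True by (simp add: nat_eq_iff)
  have "Delta_pow n m = NP n j @ winv (Delta n)" using True j concat_rep_snoc[of j "winv (Delta n)"]
    by (simp add: Delta_pow_def NP_def)
  moreover have "Delta_pow n (m + 1) = NP n j" using True mj by (auto simp: Delta_pow_def NP_def)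
  ultimately show ?thesis using sb_appL[where p="NP n j", OF sb_winv_l[OF sgw_Delta]] by (simp del: append_assoc add: append_assoc[symmetric])
next
  case False
  then have "Delta_pow n m @ Delta n = Delta_pow n (m + 1)"
    using concat_rep_snoc[of "nat m" "Delta n"] by (simp add: Delta_pow_def nat_add_distrib)
  then show ?thesis by simp
qed

lemma Delta_Dpow: "sb_eq n (Delta n @ Delta_pow n m) (Delta_pow n (m + 1))"
proof (cases "m < 0")
  case True
  obtain j where j: "nat (- m) = Suc j" using True by (cases "nat (- m)") auto
  have mj: "- m = int j + 1" using j True by (simp add: nat_eq_iff)
  have "Delta_pow n m = winv (Delta n) @ NP n j" using True j by (simp add: Delta_pow_def NP_def)
  moreover have "Delta_pow n (m + 1) = NP n j" using True mj by (auto simp: Delta_pow_def NP_def)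
  ultimately show ?thesis using sb_appR[where q="NP n j", OF sb_winv_r[OF sgw_Delta]] by simp
next
  case False
  then show ?thesis by (simp add: Delta_pow_def nat_add_distrib)
qed

lemma Si_conv:
  assumes i: "1 \<le> i" "i + 1 \<le> n"
  obtains E where "pv n E" "sb_eq n [Si i] (E @ winv (Delta n))"
proof -
  obtain E where E: "pv n E" "pos_eq n (Delta n) (Sg i # E)" using left_div[OF i] by blast
  have "sb_eq n [Si i] ([Si i] @ Delta n @ winv (Delta n))"
    using sb_appL[where p="[Si i]", OF sb_sym[OF sb_winv_r[OF sgw_Delta]]] by simp
  also have "sb_eq n ([Si i] @ Delta n @ winv (Delta n)) ([Si i, Sg i] @ E @ winv (Delta n))"
    using sb_appL[where p="[Si i]", OF sb_appR[OF pe_sb[OF E(2)]]] by simp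
  also have "sb_eq n ([Si i, Sg i] @ E @ winv (Delta n)) ([] @ E @ winv (Delta n))"
  proof -
    have s: "sb_eq n [Si i, Sg i] []" using sb_SiSg[of i n] i by simp
    show ?thesis using sb_appR[where q="E @ winv (Delta n)", OF s] by simp
  qed
  finally show ?thesis using that E(1) by simp
qed

lemma move_winv:
  assumes X: "pv n X"
  shows "sb_eq n (X @ winv (Delta n)) (winv (Delta n) @ map (tau n) X)"
proof -
  have "sb_eq n (winv (Delta n) @ map (tau n) X) (winv (Delta n) @ map (tau n) X @ Delta n @ winv (Delta n))"
    using sb_appL[where p="winv (Delta n) @ map (tau n) X", OF sb_sym[OF sb_winv_r[OF sgw_Delta]]] by simp
  also have "sb_eq n (winv (Delta n) @ map (tau n) X @ Delta n @ winv (Delta n)) (winv (Delta n) @ Delta n @ X @ winv (Delta n))"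
  proof -
    have e: "pos_eq n (map (tau n) X @ Delta n) (Delta n @ X)"
      using L1_word[OF pv_tau[OF X]] tau_tau_map[OF X] by simp
    show ?thesis using sb_appL[where p="winv (Delta n)", OF sb_appR[where q="winv (Delta n)", OF pe_sb[OF e]]] by simp
  qed
  also have "sb_eq n (winv (Delta n) @ Delta n @ X @ winv (Delta n)) ([] @ X @ winv (Delta n))"
    using sb_appR[OF sb_winv_l[OF sgw_Delta]] by (metis append.assoc)
  finally show ?thesis using sb_sym by simp
qed

lemma EX:
  assumes n: "2 \<le> n"
  shows "valid_word n W \<Longrightarrow> \<exists>m A. pv n A \<and> sb_eq n W (Delta_pow n m @ A)"
proof (induction W rule: rev_induct)
  case Nil then show ?case by (intro exI[of _ 0] exI[of _ "[]"]) (simp add: Delta_pow_def)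
next
  case (snoc w W)
  then obtain m Q where Q: "pv n Q" "sb_eq n W (Delta_pow n m @ Q)" by (auto simp: valid_word_def)
  have wv: "1 \<le> gidx w" "gidx w \<le> n - 1" using snoc.prems by (auto simp: valid_word_def)
  have sW: "sb_eq n (W @ [w]) (Delta_pow n m @ Q @ [w])" using sb_appR[OF Q(2)] by simp
  show ?case
  proof (cases w)
    case (Si i)
    have i: "1 \<le> i" "i + 1 \<le> n" using wv Si by auto
    obtain E where E: "pv n E" "sb_eq n [Si i] (E @ winv (Delta n))" using Si_conv[OF i] by blast
    have "sb_eq n (W @ [w]) (Delta_pow n m @ (Q @ E) @ winv (Delta n))"
      using sb_trans[OF sW[unfolded Si] sb_appL[where p="Delta_pow n m @ Q", OF E(2), simplified]] Si by simp
    also have "sb_eq n (Delta_pow n m @ (Q @ E) @ winv (Delta n)) (Delta_pow n m @ winv (Delta n) @ map (tau n) (Q @ E))"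
      using sb_appL[where p="Delta_pow n m", OF move_winv[of n "Q @ E"]] Q(1) E(1) by simp
    also have "sb_eq n (Delta_pow n m @ winv (Delta n) @ map (tau n) (Q @ E)) (Delta_pow n (m - 1) @ map (tau n) (Q @ E))"
      using sb_appR[OF Dpow_winv] by (metis append.assoc)
    finally have fin: "sb_eq n (W @ [w]) (Delta_pow n (m - 1) @ map (tau n) (Q @ E))" .
    have "pv n (map (tau n) (Q @ E))" using pv_tau[of n "Q @ E"] Q(1) E(1) by simp
    then show ?thesis using fin by blast
  next
    case (Sg i)
    then have "pv n (Q @ [w])" using Q(1) wv by (simp add: pg_def)
    then show ?thesis using sW by (metis append.assoc)
  next
    case (Xg i)
    then have "pv n (Q @ [w])" using Q(1) wv by (simp add: pg_def)
    then show ?thesis using sW by (metis append.assoc)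
  qed
qed

section \<open>Bases\<close>

lemma finite_pg: "finite {g. pg n g}"
proof -
  have "{g. pg n g} \<subseteq> Sg ` {..<n} \<union> Xg ` {..<n}"
  proof
    fix g assume "g \<in> {g. pg n g}"
    then show "g \<in> Sg ` {..<n} \<union> Xg ` {..<n}" by (cases g) (auto simp: pg_def)
  qed
  then show ?thesis by (rule finite_subset) simp
qed

lemma lex_less_conv: "lex_less n xs ys \<longleftrightarrow> ord_class.lexordp (map (rank n) xs) (map (rank n) ys)"
  by (simp add: lex_less_def List.lexordp_def lexordp_conv_lexord)

lemma lexmin:
  assumes A: "pv n A"
  shows "\<exists>B. positive_word B \<and> pos_eq n A B \<and> (\<forall>B'. positive_word B' \<and> pos_eq n A B' \<longrightarrow> \<not> lex_less n B' B)"
proof -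
  define S where "S = {B. positive_word B \<and> pos_eq n A B}"
  have SS: "S \<subseteq> {xs. set xs \<subseteq> {g. pg n g} \<and> length xs = length A}"
  proof
    fix B assume "B \<in> S"
    then have "pv n B" "length B = length A" using pe_pv A unfolding S_def by auto
    then show "B \<in> {xs. set xs \<subseteq> {g. pg n g} \<and> length xs = length A}"
      by (auto simp: pv_def pg_def positive_word_def valid_word_def)
  qed
  have fS: "finite S" using finite_subset[OF SS finite_lists_length_eq[OF finite_pg]] .
  define r where "r = {(x, y). x \<in> S \<and> y \<in> S \<and> lex_less n x y}"
  have fr: "finite r" using finite_subset[of r "S \<times> S"] fS unfolding r_def by auto
  have tr: "trans r" unfolding r_def trans_def lex_less_conv using lexordp_trans by blast
  have irr: "\<forall>x. (x, x) \<notin> r" unfolding r_def lex_less_conv using lexordp_irreflexive' by auto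
  have "acyclic r" unfolding acyclic_def using trancl_id[OF tr] irr by simp
  then have wf: "wf r" using finite_acyclic_wf fr by blast
  have "A \<in> S" using A unfolding S_def by (simp add: pv_def)
  then obtain z where z: "z \<in> S" "\<forall>y. (y, z) \<in> r \<longrightarrow> y \<notin> S" using wf_eq_minimal[THEN iffD1, OF wf] by blast
  then show ?thesis unfolding S_def r_def by auto
qed

lemma rank_inj: "inj_on (rank n) {g. pg n g}"
proof
  fix x y assume "x \<in> {g. pg n g}" "y \<in> {g. pg n g}" "rank n x = rank n y"
  then show "x = y" by (cases x; cases y) (auto simp: pg_def)
qed

lemma base_unique:
  assumes "pv n B" "pv n B'" "is_own_base n B" "is_own_base n B'" "pos_eq n B B'"
  shows "B = B'"
proof -
  have "\<not> lex_less n B' B" "\<not> lex_less n B B'"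
    using assms unfolding is_own_base_def by (auto simp: pv_def pe_sym)
  then have "map (rank n) B = map (rank n) B'" unfolding lex_less_conv using lexordp_linear by blast
  moreover have "set B \<union> set B' \<subseteq> {g. pg n g}"
    using assms(1,2) by (auto simp: pv_def pg_def positive_word_def valid_word_def)
  then have "inj_on (rank n) (set B \<union> set B')" using inj_on_subset[OF rank_inj] by blast
  ultimately show ?thesis using map_inj_on by blast
qed

lemma own_base_of:
  assumes A: "pv n A"
  obtains B where "pv n B" "pos_eq n A B" "is_own_base n B"
proof -
  obtain B where B: "positive_word B" "pos_eq n A B"
    "\<forall>B'. positive_word B' \<and> pos_eq n A B' \<longrightarrow> \<not> lex_less n B' B"
    using lexmin[OF A] by blast
  have "pv n B" using pe_pv[OF B(2)] A by blast
  moreover have "is_own_base n B" unfolding is_own_base_def using B pe_trans by blast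
  ultimately show ?thesis using that B(2) by blast
qed

lemma pe_concat_rep: "pos_eq n X Y \<Longrightarrow> pos_eq n (concat (replicate j X)) (concat (replicate j Y))"
  by (induction j) (auto intro: pe_app)

lemma sb_concat_rep: "sb_eq n X Y \<Longrightarrow> sb_eq n (concat (replicate j X)) (concat (replicate j Y))"
  by (induction j) (auto intro: sb_app)

lemma rev_concat_rep: "rev (concat (replicate j X)) = concat (replicate j (rev X))"
proof (induction j)
  case 0 then show ?case by simp
next
  case (Suc j)
  have "rev (concat (replicate (Suc j) X)) = rev (concat (replicate j X)) @ rev X" by simp
  also have "\<dots> = concat (replicate (Suc j) (rev X))" using Suc concat_rep_snoc by simp
  finally show ?case .
qed

lemma sb_winv_pe:
  assumes "sgw n X" "sgw n Y" "pos_eq n X Y"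
  shows "sb_eq n (winv X) (winv Y)"
proof -
  have "sb_eq n (winv X) (winv X @ Y @ winv Y)"
    using sb_appL[where p="winv X", OF sb_sym[OF sb_winv_r[OF assms(2)]]] by simp
  also have "sb_eq n (winv X @ Y @ winv Y) (winv X @ X @ winv Y)"
    using sb_appL[where p="winv X", OF sb_appR[where q="winv Y", OF pe_sb[OF pe_sym[OF assms(3)]]]] .
  also have "sb_eq n (winv X @ X @ winv Y) ([] @ winv Y)"
    using sb_appR[where q="winv Y", OF sb_winv_l[OF assms(1)]] by simp
  finally show ?thesis by simp
qed

lemma rev_Dpow: "sb_eq n (rev (Delta_pow n m)) (Delta_pow n m)"
proof (cases "0 \<le> m")
  case True
  have "pos_eq n (concat (replicate (nat m) (rev (Delta n)))) (concat (replicate (nat m) (Delta n)))"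
    using pe_concat_rep[OF rev_Delta[of n n]] by simp
  then show ?thesis using True by (simp add: Delta_pow_def rev_concat_rep pe_sb)
next
  case False
  have sr: "sgw n (rev (Delta n))" using sgw_Delta[of n] by (simp add: sgw_def)
  have e: "rev (winv (Delta n)) = winv (rev (Delta n))" by (simp add: winv_def rev_map)
  have "sb_eq n (winv (rev (Delta n))) (winv (Delta n))"
    using sb_winv_pe[OF sr sgw_Delta rev_Delta[of n n]] by simp
  then show ?thesis using False sb_concat_rep by (simp add: Delta_pow_def rev_concat_rep e)
qed

lemma EXR:
  assumes n: "2 \<le> n" and W: "valid_word n W"
  shows "\<exists>m A. pv n A \<and> sb_eq n W (A @ Delta_pow n m)"
proof -
  have "valid_word n (rev W)" using W by (simp add: valid_word_def)
  then obtain m A where A: "pv n A" "sb_eq n (rev W) (Delta_pow n m @ A)" using EX[OF n] by blast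
  have "sb_eq n W (rev A @ rev (Delta_pow n m))" using sb_rev[OF A(2)] by simp
  also have "sb_eq n (rev A @ rev (Delta_pow n m)) (rev A @ Delta_pow n m)" using sb_appL[OF rev_Dpow] .
  finally show ?thesis using A(1) pv_rev by blast
qed

lemma UNIQR:
  assumes n: "2 \<le> n" and A: "pv n A" "pv n A'" and nd: "ndR n A" "ndR n A'"
    and e: "sb_eq n (A @ Delta_pow n m) (A' @ Delta_pow n m')"
  shows "m = m' \<and> pos_eq n A A'"
proof -
  have ndl: "ndL n (rev X)" if X: "ndR n X" for X
  proof -
    { fix Z assume Z: "positive_word Z" "pos_eq n (rev X) (Delta n @ Z)"
      have "pos_eq n X (rev Z @ rev (Delta n))" using pe_rev[OF Z(2)] by simp
      also have "pos_eq n (rev Z @ rev (Delta n)) (rev Z @ Delta n)" using pe_appL[OF rev_Delta[OF order_refl]] .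
      finally have "pos_eq n X (rev Z @ Delta n)" .
      moreover have "positive_word (rev Z)" using Z(1) by (simp add: positive_word_def)
      ultimately have False using X unfolding ndR_def by blast }
    then show ?thesis unfolding ndL_def by blast
  qed
  have "sb_eq n (rev (Delta_pow n m) @ rev A) (rev (Delta_pow n m') @ rev A')" using sb_rev[OF e] by simp
  then have "sb_eq n (Delta_pow n m @ rev A) (Delta_pow n m' @ rev A')"
    using sb_trans[OF sb_appR[OF sb_sym[OF rev_Dpow]] sb_trans[OF _ sb_appR[OF rev_Dpow]]] by blast
  then have "m = m' \<and> pos_eq n (rev A) (rev A')" using UNIQ[OF n _ _ ndl[OF nd(1)] ndl[OF nd(2)]] A by simp
  then show ?thesis using pe_rev_iff by blast
qed

lemma own_base_pv: "is_own_base n A \<Longrightarrow> valid_word n A \<Longrightarrow> pv n A"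
  by (simp add: is_own_base_def pv_def)

lemma left_exists:
  assumes n: "2 \<le> n" and W: "valid_word n W"
  shows "\<exists>m A. is_left_nf n W m A"
proof -
  let ?P = "\<lambda>p. pv n (snd p) \<and> sb_eq n W (Delta_pow n (fst p) @ snd p)"
  obtain m0 A0 where "pv n A0" "sb_eq n W (Delta_pow n m0 @ A0)" using EX[OF n W] by blast
  then have "?P (m0, A0)" by simp
  then obtain p where p: "?P p" and pmin: "\<forall>q. ?P q \<longrightarrow> length (snd p) \<le> length (snd q)"
    using ex_has_least_nat[of ?P "(m0, A0)" "\<lambda>p. length (snd p)"] by blast
  obtain m A where mA: "p = (m, A)" by fastforce
  have A: "pv n A" "sb_eq n W (Delta_pow n m @ A)" using p mA by auto
  have nd: "ndL n A"
    unfolding ndL_def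
  proof
    assume "\<exists>Z. positive_word Z \<and> pos_eq n A (Delta n @ Z)"
    then obtain Z where Z: "positive_word Z" "pos_eq n A (Delta n @ Z)" by blast
    have pZ: "pv n Z" using pe_pv[OF Z(2)] A(1) by simp
    have "sb_eq n W (Delta_pow n m @ Delta n @ Z)" using sb_trans[OF A(2) sb_appL[OF pe_sb[OF Z(2)]]] .
    also have "sb_eq n (Delta_pow n m @ Delta n @ Z) (Delta_pow n (m + 1) @ Z)"
      using sb_appR[OF Dpow_Delta] by (metis append.assoc)
    finally have "?P (m + 1, Z)" using pZ by simp
    then have "length A \<le> length Z" using pmin mA by fastforce
    moreover have "length A = length (Delta n) + length Z" using pe_len[OF Z(2)] by simp
    ultimately show False using len_Delta[OF n] by simp
  qed
  obtain B where B: "pv n B" "pos_eq n A B" "is_own_base n B" using own_base_of[OF A(1)] by blast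
  have "is_left_nf n W m B"
    unfolding is_left_nf_def
  proof (intro conjI)
    show "valid_word n B" using B(1) by (simp add: pv_def)
    show "is_own_base n B" by (rule B(3))
    show "\<not> (\<exists>Z. positive_word Z \<and> pos_eq n B (Delta n @ Z))"
      using nd B(2) pe_trans unfolding ndL_def by blast
    show "sb_eq n W (Delta_pow n m @ B)" using sb_trans[OF A(2) sb_appL[OF pe_sb[OF B(2)]]] .
  qed
  then show ?thesis by blast
qed

lemma left_unique:
  assumes n: "2 \<le> n" and h: "is_left_nf n W m A" "is_left_nf n W m' A'"
  shows "m = m' \<and> A = A'"
proof -
  have A: "pv n A" "pv n A'" using h own_base_pv unfolding is_left_nf_def by auto
  have nd: "ndL n A" "ndL n A'" using h unfolding is_left_nf_def ndL_def by auto
  have "sb_eq n (Delta_pow n m @ A) (Delta_pow n m' @ A')"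
    using h unfolding is_left_nf_def using sb_sym sb_trans by blast
  then have "m = m' \<and> pos_eq n A A'" using UNIQ[OF n A nd] by blast
  then show ?thesis using base_unique[OF A] h unfolding is_left_nf_def by blast
qed

lemma right_exists:
  assumes n: "2 \<le> n" and W: "valid_word n W"
  shows "\<exists>m A. is_right_nf n W A m"
proof -
  let ?P = "\<lambda>p. pv n (snd p) \<and> sb_eq n W (snd p @ Delta_pow n (fst p))"
  obtain m0 A0 where "pv n A0" "sb_eq n W (A0 @ Delta_pow n m0)" using EXR[OF n W] by blast
  then have "?P (m0, A0)" by simp
  then obtain p where p: "?P p" and pmin: "\<forall>q. ?P q \<longrightarrow> length (snd p) \<le> length (snd q)"
    using ex_has_least_nat[of ?P "(m0, A0)" "\<lambda>p. length (snd p)"] by blast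
  obtain m A where mA: "p = (m, A)" by fastforce
  have A: "pv n A" "sb_eq n W (A @ Delta_pow n m)" using p mA by auto
  have nd: "ndR n A"
    unfolding ndR_def
  proof
    assume "\<exists>Z. positive_word Z \<and> pos_eq n A (Z @ Delta n)"
    then obtain Z where Z: "positive_word Z" "pos_eq n A (Z @ Delta n)" by blast
    have pZ: "pv n Z" using pe_pv[OF Z(2)] A(1) by simp
    have "sb_eq n W ((Z @ Delta n) @ Delta_pow n m)" using sb_trans[OF A(2) sb_appR[OF pe_sb[OF Z(2)]]] .
    also have "sb_eq n ((Z @ Delta n) @ Delta_pow n m) (Z @ Delta_pow n (m + 1))"
      using sb_appL[OF Delta_Dpow] by (metis append.assoc)
    finally have "?P (m + 1, Z)" using pZ by simp
    then have "length A \<le> length Z" using pmin mA by fastforce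
    moreover have "length A = length (Delta n) + length Z" using pe_len[OF Z(2)] by simp
    ultimately show False using len_Delta[OF n] by simp
  qed
  obtain B where B: "pv n B" "pos_eq n A B" "is_own_base n B" using own_base_of[OF A(1)] by blast
  have "is_right_nf n W B m"
    unfolding is_right_nf_def
  proof (intro conjI)
    show "valid_word n B" using B(1) by (simp add: pv_def)
    show "is_own_base n B" by (rule B(3))
    show "\<not> (\<exists>Z. positive_word Z \<and> pos_eq n B (Z @ Delta n))"
      using nd B(2) pe_trans unfolding ndR_def by blast
    show "sb_eq n W (B @ Delta_pow n m)" using sb_trans[OF A(2) sb_appR[OF pe_sb[OF B(2)]]] .
  qed
  then show ?thesis by blast
qed

lemma right_unique:
  assumes n: "2 \<le> n" and h: "is_right_nf n W A m" "is_right_nf n W A' m'"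
  shows "m = m' \<and> A = A'"
proof -
  have A: "pv n A" "pv n A'" using h own_base_pv unfolding is_right_nf_def by auto
  have nd: "ndR n A" "ndR n A'" using h unfolding is_right_nf_def ndR_def by auto
  have "sb_eq n (A @ Delta_pow n m) (A' @ Delta_pow n m')"
    using h unfolding is_right_nf_def using sb_sym sb_trans by blast
  then have "m = m' \<and> pos_eq n A A'" using UNIQR[OF n A nd] by blast
  then show ?thesis using base_unique[OF A] h unfolding is_right_nf_def by blast
qed

theorem corollary2p3:
  fixes n :: nat
  assumes "n \<ge> 2"
  shows "(\<forall>W. valid_word n W \<longrightarrow> (\<exists>!p. is_left_nf n W (fst p) (snd p)))
       \<and> (\<forall>W. valid_word n W \<longrightarrow> (\<exists>!p. is_right_nf n W (fst p) (snd p)))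
       \<and> (\<forall>W1 W2. valid_word n W1 \<and> valid_word n W2 \<longrightarrow>
            (sb_eq n W1 W2 \<longleftrightarrow> left_nf n W1 = left_nf n W2))
       \<and> (\<forall>W1 W2. valid_word n W1 \<and> valid_word n W2 \<longrightarrow>
            (sb_eq n W1 W2 \<longleftrightarrow> right_nf n W1 = right_nf n W2))"
proof -
  have n: "2 \<le> n" using assms by simp
  have L: "\<exists>!p. is_left_nf n W (fst p) (snd p)" if vW: "valid_word n W" for W
  proof -
    obtain m A where "is_left_nf n W m A" using left_exists[OF n vW] by blast
    then have "is_left_nf n W (fst (m, A)) (snd (m, A))" by simp
    moreover have "q = (m, A)" if "is_left_nf n W (fst q) (snd q)" for q
      using left_unique[OF n that \<open>is_left_nf n W m A\<close>] by (cases q) auto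
    ultimately show ?thesis by blast
  qed
  have R: "\<exists>!p. is_right_nf n W (fst p) (snd p)" if vW: "valid_word n W" for W
  proof -
    obtain m A where "is_right_nf n W A m" using right_exists[OF n vW] by blast
    then have "is_right_nf n W (fst (A, m)) (snd (A, m))" by simp
    moreover have "q = (A, m)" if "is_right_nf n W (fst q) (snd q)" for q
      using right_unique[OF n that \<open>is_right_nf n W A m\<close>] by (cases q) auto
    ultimately show ?thesis by blast
  qed
  have Lnf: "is_left_nf n W (fst (left_nf n W)) (snd (left_nf n W))" if "valid_word n W" for W
    unfolding left_nf_def using theI'[OF L[OF that]] .
  have Rnf: "is_right_nf n W (fst (right_nf n W)) (snd (right_nf n W))" if "valid_word n W" for W
    unfolding right_nf_def using theI'[OF R[OF that]] .
  have L3: "sb_eq n W1 W2 \<longleftrightarrow> left_nf n W1 = left_nf n W2" if v: "valid_word n W1" "valid_word n W2" for W1 W2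
  proof
    assume e: "sb_eq n W1 W2"
    have "is_left_nf n W2 (fst (left_nf n W1)) (snd (left_nf n W1))"
      using Lnf[OF v(1)] sb_trans[OF sb_sym[OF e]] unfolding is_left_nf_def by blast
    then have "left_nf n W1 = left_nf n W2"
      using Lnf[OF v(2)] left_unique[OF n] by (metis prod.collapse)
    then show "left_nf n W1 = left_nf n W2" .
  next
    assume e: "left_nf n W1 = left_nf n W2"
    have "sb_eq n W1 (Delta_pow n (fst (left_nf n W1)) @ snd (left_nf n W1))"
      using Lnf[OF v(1)] unfolding is_left_nf_def by blast
    moreover have "sb_eq n W2 (Delta_pow n (fst (left_nf n W1)) @ snd (left_nf n W1))"
      using Lnf[OF v(2)] e unfolding is_left_nf_def by simp
    ultimately show "sb_eq n W1 W2" using sb_trans sb_sym by blast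
  qed
  have R3: "sb_eq n W1 W2 \<longleftrightarrow> right_nf n W1 = right_nf n W2" if v: "valid_word n W1" "valid_word n W2" for W1 W2
  proof
    assume e: "sb_eq n W1 W2"
    have "is_right_nf n W2 (fst (right_nf n W1)) (snd (right_nf n W1))"
      using Rnf[OF v(1)] sb_trans[OF sb_sym[OF e]] unfolding is_right_nf_def by blast
    then show "right_nf n W1 = right_nf n W2"
      using Rnf[OF v(2)] right_unique[OF n] by (metis prod.collapse)
  next
    assume e: "right_nf n W1 = right_nf n W2"
    have "sb_eq n W1 (fst (right_nf n W1) @ Delta_pow n (snd (right_nf n W1)))"
      using Rnf[OF v(1)] unfolding is_right_nf_def by blast
    moreover have "sb_eq n W2 (fst (right_nf n W1) @ Delta_pow n (snd (right_nf n W1)))"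
      using Rnf[OF v(2)] e unfolding is_right_nf_def by simp
    ultimately show "sb_eq n W1 W2" using sb_trans sb_sym by blast
  qed
  show ?thesis using L R L3 R3 by blast
qed

end
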